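(* Let $\mu$ be an $N\times N$ matrix measure satisfying the standing assumptions below, $\{P_n\}$ its orthonormal matrix polynomials with $P_0=M_0^{-1/2}$ and recurrence coefficients $A_n$ (invertible), $B_n$ (self-adjoint), $Q_n(z)=\int\frac{P_n(z)-P_n(x)}{z-x}W(x)d\tau_\mu(x)$, $S(z)=\int\frac{W(x)}{x-z}d\tau_\mu(x)$, $F_k(z)=Q_k(z)+P_k(z)S(z)$. Let $J$ be the Jacobi operator on $\ell^2(\mathbb{C}^N)$ with domain $\mathcal{D}$ (finite sums) given by $JV=e_0\otimes(A_0v_1+B_0v_0)+\sum_{n\ge1}e_n\otimes(A_nv_{n+1}+B_nv_n+A_{n-1}^\ast v_{n-1})$, and let $(J^\ast,\mathcal{D}^\ast)$ be its adjoint. Assume that for every $z\in\mathbb{C}\setminus\mathbb{R}$ and every nonzero $v\in\mathbb{C}^N$, $\sum_{n=0}^\infty\|P_n(z)v\|^2=\infty$. For $z\in\mathbb{C}\setminus\mathbb{R}$ define $G_z$ on $\mathcal{D}$ by $G_zV=\sum_ne_n\otimes\sum_k(G_z)_{n,k}v_k$ with $$(G_z)_{n,k}=\begin{cases}P_n(z)F_k^\ast(z),&n\le k,\\ F_n(z)P_k^\ast(z),&n>k.\end{cases}$$ Then $G_z$ is the resolvent of $J^\ast$: $z$ lies in the resolvent set of $J^\ast$, $G_z$ extends to a bounded operator on $\ell^2(\mathbb{C}^N)$, and $G_z=(J^\ast-z)^{-1}$.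
   Context: Matrix measure $\mu$: $\sigma$-additive map from Borel sets of $\mathbb{R}$ to positive semi-definite $N\times N$ matrices; $\tau_\mu=\mathrm{Tr}\,\mu$; $\mu(B)_{i,j}=\int_BW_{i,j}d\tau_\mu$. Standing assumptions: $\tau_\mu$ has infinite support, all moments $\int x^kW_{i,j}d\tau_\mu$ finite, $W(x)$ positive definite $\tau_\mu$-a.e.; $M_0=\int Wd\tau_\mu$. For a matrix-valued function $F$, $F^\ast(z)=(F(\bar z))^\ast$. Orthonormal polynomials: $\deg P_n=n$, invertible leading coefficient, $\int P_nWP_m^\ast d\tau_\mu=\delta_{n,m}I$, satisfying $zP_n=A_nP_{n+1}+B_nP_n+A_{n-1}^\ast P_{n-1}$ ($n\ge1$), $zP_0=A_0P_1+B_0P_0$. $\ell^2(\mathbb{C}^N)$ is the Hilbert space of square-summable $\mathbb{C}^N$-valued sequences $\sum e_n\otimes v_n$. *)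

theory Defs
  imports "HOL-Analysis.Analysis"
begin

type_synonym 'n cmat = "complex ^ 'n ^ 'n"
type_synonym 'n cvec = "complex ^ 'n"
type_synonym 'n seq = "nat \<Rightarrow> complex ^ 'n"

definition madj :: "'n::finite cmat \<Rightarrow> 'n cmat" where
  "madj M = (\<chi> i j. cnj (M $ j $ i))"

definition smat :: "complex \<Rightarrow> 'n::finite cmat \<Rightarrow> 'n cmat" where
  "smat c M = (\<chi> i j. c * M $ i $ j)"

definition mtrace :: "'n::finite cmat \<Rightarrow> complex" where
  "mtrace M = (\<Sum>i\<in>UNIV. M $ i $ i)"

definition cinner :: "'n::finite cvec \<Rightarrow> 'n cvec \<Rightarrow> complex" where
  "cinner u v = (\<Sum>i\<in>UNIV. u $ i * cnj (v $ i))"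

definition hermitian :: "'n::finite cmat \<Rightarrow> bool" where
  "hermitian M \<longleftrightarrow> madj M = M"

definition posdef :: "'n::finite cmat \<Rightarrow> bool" where
  "posdef M \<longleftrightarrow> hermitian M \<and> (\<forall>v. v \<noteq> 0 \<longrightarrow> 0 < Re (cinner (M *v v) v))"

definition inv_sqrt :: "'n::finite cmat \<Rightarrow> 'n cmat" where
  "inv_sqrt M = (THE R. posdef R \<and> R ** R = matrix_inv M)"

definition measure_support :: "real measure \<Rightarrow> real set" where
  "measure_support \<tau> = {x. \<forall>e>0. emeasure \<tau> (ball x e) > 0}"

text \<open>Standing assumptions on the matrix measure mu(B) = integral over B of W d tau,
  where tau = Tr mu (so Tr W = 1 tau-a.e.).\<close>
definition standing_assumptions :: "real measure \<Rightarrow> (real \<Rightarrow> 'n::finite cmat) \<Rightarrow> bool" where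
  "standing_assumptions \<tau> W \<longleftrightarrow>
     sets \<tau> = sets borel \<and> finite_measure \<tau> \<and>
     (AE x in \<tau>. mtrace (W x) = 1) \<and>
     infinite (measure_support \<tau>) \<and>
     (\<forall>k::nat. \<forall>i j. integrable \<tau> (\<lambda>x. x ^ k * Re (W x $ i $ j)) \<and>
                   integrable \<tau> (\<lambda>x. x ^ k * Im (W x $ i $ j))) \<and>
     (AE x in \<tau>. posdef (W x))"

definition moment0 :: "real measure \<Rightarrow> (real \<Rightarrow> 'n::finite cmat) \<Rightarrow> 'n cmat" where
  "moment0 \<tau> W = integral\<^sup>L \<tau> W"

definition matrix_poly_seq :: "(nat \<Rightarrow> complex \<Rightarrow> 'n::finite cmat) \<Rightarrow> bool" where
  "matrix_poly_seq P \<longleftrightarrow> (\<exists>C :: nat \<Rightarrow> nat \<Rightarrow> 'n cmat.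
      (\<forall>n z. P n z = (\<Sum>j\<le>n. smat (z ^ j) (C n j))) \<and> (\<forall>n. invertible (C n n)))"

definition orthonormal_polys ::
  "real measure \<Rightarrow> (real \<Rightarrow> 'n::finite cmat) \<Rightarrow> (nat \<Rightarrow> complex \<Rightarrow> 'n cmat) \<Rightarrow> bool" where
  "orthonormal_polys \<tau> W P \<longleftrightarrow> matrix_poly_seq P \<and>
     (\<forall>n m. integral\<^sup>L \<tau> (\<lambda>x. P n (of_real x) ** W x ** madj (P m (of_real x)))
            = (if n = m then mat 1 else 0))"

definition three_term ::
  "(nat \<Rightarrow> complex \<Rightarrow> 'n::finite cmat) \<Rightarrow> (nat \<Rightarrow> 'n cmat) \<Rightarrow> (nat \<Rightarrow> 'n cmat) \<Rightarrow> bool" where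
  "three_term P A B \<longleftrightarrow>
     (\<forall>z. smat z (P 0 z) = A 0 ** P 1 z + B 0 ** P 0 z) \<and>
     (\<forall>n z. n \<ge> 1 \<longrightarrow> smat z (P n z) = A n ** P (Suc n) z + B n ** P n z + madj (A (n - 1)) ** P (n - 1) z)"

definition Qfun :: "real measure \<Rightarrow> (real \<Rightarrow> 'n::finite cmat) \<Rightarrow> (nat \<Rightarrow> complex \<Rightarrow> 'n cmat)
    \<Rightarrow> nat \<Rightarrow> complex \<Rightarrow> 'n cmat" where
  "Qfun \<tau> W P n z = integral\<^sup>L \<tau> (\<lambda>x. smat (1 / (z - of_real x)) (P n z - P n (of_real x)) ** W x)"

definition Sfun :: "real measure \<Rightarrow> (real \<Rightarrow> 'n::finite cmat) \<Rightarrow> complex \<Rightarrow> 'n cmat" where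
  "Sfun \<tau> W z = integral\<^sup>L \<tau> (\<lambda>x. smat (1 / (of_real x - z)) (W x))"

definition Ffun :: "real measure \<Rightarrow> (real \<Rightarrow> 'n::finite cmat) \<Rightarrow> (nat \<Rightarrow> complex \<Rightarrow> 'n cmat)
    \<Rightarrow> nat \<Rightarrow> complex \<Rightarrow> 'n cmat" where
  "Ffun \<tau> W P k z = Qfun \<tau> W P k z + P k z ** Sfun \<tau> W z"

definition star_fun :: "(complex \<Rightarrow> 'n::finite cmat) \<Rightarrow> complex \<Rightarrow> 'n cmat" where
  "star_fun F z = madj (F (cnj z))"

definition l2 :: "'n::finite seq set" where
  "l2 = {V. summable (\<lambda>n. (norm (V n))\<^sup>2)}"

definition l2_inner :: "'n::finite seq \<Rightarrow> 'n seq \<Rightarrow> complex" where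
  "l2_inner V U = (\<Sum>n. cinner (V n) (U n))"

definition l2_norm :: "'n::finite seq \<Rightarrow> real" where
  "l2_norm V = sqrt (\<Sum>n. (norm (V n))\<^sup>2)"

text \<open>Finite sums of e_n \<otimes> v_n.\<close>
definition finseq :: "'n::finite seq set" where
  "finseq = {V. \<exists>M. \<forall>n\<ge>M. V n = 0}"

definition jacobi :: "(nat \<Rightarrow> 'n::finite cmat) \<Rightarrow> (nat \<Rightarrow> 'n cmat) \<Rightarrow> 'n seq \<Rightarrow> 'n seq" where
  "jacobi A B V n = A n *v V (Suc n) + B n *v V n +
      (if n = 0 then 0 else madj (A (n - 1)) *v V (n - 1))"

definition jacobi_adj_dom :: "(nat \<Rightarrow> 'n::finite cmat) \<Rightarrow> (nat \<Rightarrow> 'n cmat) \<Rightarrow> 'n seq set" where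
  "jacobi_adj_dom A B = {U \<in> l2. \<exists>Y\<in>l2. \<forall>V\<in>finseq. l2_inner (jacobi A B V) U = l2_inner V Y}"

definition jacobi_adj :: "(nat \<Rightarrow> 'n::finite cmat) \<Rightarrow> (nat \<Rightarrow> 'n cmat) \<Rightarrow> 'n seq \<Rightarrow> 'n seq" where
  "jacobi_adj A B U = (THE Y. Y \<in> l2 \<and> (\<forall>V\<in>finseq. l2_inner (jacobi A B V) U = l2_inner V Y))"

definition is_resolvent :: "('n::finite seq \<Rightarrow> 'n seq) \<Rightarrow> 'n seq set \<Rightarrow> complex \<Rightarrow> ('n seq \<Rightarrow> 'n seq) \<Rightarrow> bool" where
  "is_resolvent T D z G \<longleftrightarrow>
     (\<forall>F\<in>l2. G F \<in> l2) \<and>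
     (\<forall>F\<in>l2. \<forall>H\<in>l2. \<forall>c a. G (\<lambda>n. c *s F n + a *s H n) = (\<lambda>n. c *s G F n + a *s G H n)) \<and>
     (\<exists>C. \<forall>F\<in>l2. l2_norm (G F) \<le> C * l2_norm F) \<and>
     (\<forall>F\<in>l2. G F \<in> D \<and> (\<lambda>n. T (G F) n - z *s G F n) = F) \<and>
     (\<forall>U\<in>D. G (\<lambda>n. T U n - z *s U n) = U)"

definition resolvent_set :: "('n::finite seq \<Rightarrow> 'n seq) \<Rightarrow> 'n seq set \<Rightarrow> complex set" where
  "resolvent_set T D = {z. \<exists>G. is_resolvent T D z G}"

definition Gmat :: "real measure \<Rightarrow> (real \<Rightarrow> 'n::finite cmat) \<Rightarrow> (nat \<Rightarrow> complex \<Rightarrow> 'n cmat)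
   \<Rightarrow> complex \<Rightarrow> nat \<Rightarrow> nat \<Rightarrow> 'n cmat" where
  "Gmat \<tau> W P z n k = (if n \<le> k then P n z ** star_fun (Ffun \<tau> W P k) z
                          else Ffun \<tau> W P n z ** star_fun (P k) z)"

definition Gop :: "real measure \<Rightarrow> (real \<Rightarrow> 'n::finite cmat) \<Rightarrow> (nat \<Rightarrow> complex \<Rightarrow> 'n cmat)
   \<Rightarrow> complex \<Rightarrow> 'n seq \<Rightarrow> 'n seq" where
  "Gop \<tau> W P z V n = (\<Sum>k. Gmat \<tau> W P z n k *v V k)"

end

theory Submission
  imports Defs "HOL-Library.Diagonal_Subsequence"
begin

lemma mvec_nth: "((A::'a::semiring_1^'n::finite^'m::finite) *v x) $ i = (\<Sum>j\<in>UNIV. A $ i $ j * x $ j)"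
  by (simp add: matrix_vector_mult_def)

lemma mmul_nth: "((A::'a::semiring_1^'n::finite^'m::finite) ** B) $ i $ j = (\<Sum>k\<in>UNIV. A $ i $ k * B $ k $ j)"
  by (simp add: matrix_matrix_mult_def)

lemma madj_nth[simp]: "madj M $ i $ j = cnj (M $ j $ i)"
  by (simp add: madj_def)

lemma madj_madj[simp]: "madj (madj M) = M"
  by (simp add: vec_eq_iff)

lemma madj_add: "madj (M + N) = madj M + madj N"
  by (simp add: vec_eq_iff)

lemma madj_diff: "madj (M - N) = madj M - madj N"
  by (simp add: vec_eq_iff)

lemma madj_uminus: "madj (- M) = - madj M"
  by (simp add: vec_eq_iff)

lemma madj_zero[simp]: "madj 0 = 0"
  by (simp add: vec_eq_iff)

lemma madj_mat[simp]: "madj (mat c) = mat (cnj c)"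
  by (simp add: vec_eq_iff mat_def)

lemma madj_mult: "madj (A ** B) = madj B ** madj A"
  by (simp add: vec_eq_iff mmul_nth mult.commute)

lemma madj_sum: "finite S \<Longrightarrow> madj (\<Sum>i\<in>S. f i) = (\<Sum>i\<in>S. madj (f i))"
  by (induct S rule: finite_induct) (auto simp: madj_add)

lemma smat_nth[simp]: "smat c M $ i $ j = c * M $ i $ j"
  by (simp add: smat_def)

lemma madj_smat: "madj (smat c M) = smat (cnj c) (madj M)"
  by (simp add: vec_eq_iff)

lemma ifmult: "(if P then a else 0) * (b::'a::semiring_0) = (if P then a * b else 0)"
  by simp

lemma multif: "(b::'a::semiring_0) * (if P then a else 0) = (if P then b * a else 0)"
  by simp

lemma smat_mat_left: "smat c M = mat c ** M"
  by (simp add: vec_eq_iff mmul_nth mat_def ifmult)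

lemma smat_mat_right: "smat c M = M ** mat c"
  by (simp add: vec_eq_iff mmul_nth mat_def multif mult.commute)

lemma smat_mult_left: "smat c A ** B = smat c (A ** B)"
  by (simp add: vec_eq_iff mmul_nth sum_distrib_left mult.assoc)

lemma smat_mult_right: "A ** smat c B = smat c (A ** B)"
  by (simp add: vec_eq_iff mmul_nth sum_distrib_left mult.assoc mult.left_commute)

lemma smat_smat: "smat a (smat b M) = smat (a*b) M"
  by (simp add: vec_eq_iff mult.assoc)

lemma smat_add: "smat c (M + N) = smat c M + smat c N"
  by (simp add: vec_eq_iff algebra_simps)

lemma smat_diff: "smat c (M - N) = smat c M - smat c N"
  by (simp add: vec_eq_iff algebra_simps)

lemma smat_add_left: "smat (a + b) M = smat a M + smat b M"
  by (simp add: vec_eq_iff algebra_simps)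

lemma smat_one[simp]: "smat 1 M = M"
  by (simp add: vec_eq_iff)

lemma smat_zero_right[simp]: "smat c 0 = 0"
  by (simp add: vec_eq_iff)

lemma smat_mvec: "smat c M *v v = c *s (M *v v)"
  by (simp add: vec_eq_iff mvec_nth sum_distrib_left mult.assoc)

lemma mat_mvec: "mat c *v v = c *s (v::complex^'n::finite)"
  by (simp add: vec_eq_iff mvec_nth mat_def ifmult)

lemma mvec_scale: "(M::complex^'n::finite^'m::finite) *v (c *s v) = c *s (M *v v)"
  by (simp add: vec_eq_iff mvec_nth sum_distrib_left mult.left_commute)

lemma mvec_add: "(M::'a::semiring_1^'n::finite^'m::finite) *v (u + v) = M *v u + M *v v"
  by (simp add: vec_eq_iff mvec_nth algebra_simps sum.distrib)

lemma mvec_diff: "(M::'a::ring_1^'n::finite^'m::finite) *v (u - v) = M *v u - M *v v"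
  by (simp add: vec_eq_iff mvec_nth algebra_simps sum_subtractf)

lemma mvec_uminus: "(M::'a::ring_1^'n::finite^'m::finite) *v (- v) = - (M *v v)"
  by (simp add: vec_eq_iff mvec_nth sum_negf)

lemma mvec_zero[simp]: "(M::'a::semiring_1^'n::finite^'m::finite) *v 0 = 0"
  by (simp add: vec_eq_iff mvec_nth)

lemma madd_mvec: "((M::'a::semiring_1^'n::finite^'m::finite) + N) *v v = M *v v + N *v v"
  by (simp add: vec_eq_iff mvec_nth algebra_simps sum.distrib)

lemma mdiff_mvec: "((M::'a::ring_1^'n::finite^'m::finite) - N) *v v = M *v v - N *v v"
  by (simp add: vec_eq_iff mvec_nth algebra_simps sum_subtractf)

lemma zero_mvec[simp]: "(0::'a::semiring_1^'n::finite^'m::finite) *v v = 0"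
  by (simp add: vec_eq_iff mvec_nth)

lemma msum_mvec: "finite S \<Longrightarrow> (\<Sum>i\<in>S. (f i::'a::semiring_1^'n::finite^'m::finite)) *v v = (\<Sum>i\<in>S. f i *v v)"
  by (induct S rule: finite_induct) (auto simp: madd_mvec)

lemma mvec_sum: "finite S \<Longrightarrow> (M::'a::semiring_1^'n::finite^'m::finite) *v (\<Sum>i\<in>S. f i) = (\<Sum>i\<in>S. M *v f i)"
  by (induct S rule: finite_induct) (auto simp: mvec_add)

lemma mvec_assoc: "(A::'a::semiring_1^'n::finite^'m::finite) *v (B *v v) = (A ** B) *v v"
  by (simp add: matrix_vector_mul_assoc)

lemma cinner_add_left: "cinner (u + v) w = cinner u w + cinner v w"
  by (simp add: cinner_def algebra_simps sum.distrib)

lemma cinner_add_right: "cinner w (u + v) = cinner w u + cinner w v"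
  by (simp add: cinner_def algebra_simps sum.distrib)

lemma cinner_diff_left: "cinner (u - v) w = cinner u w - cinner v w"
  by (simp add: cinner_def algebra_simps sum_subtractf)

lemma cinner_diff_right: "cinner w (u - v) = cinner w u - cinner w v"
  by (simp add: cinner_def algebra_simps sum_subtractf)

lemma cinner_uminus_left: "cinner (- u) w = - cinner u w"
  by (simp add: cinner_def sum_negf)

lemma cinner_uminus_right: "cinner w (- u) = - cinner w u"
  by (simp add: cinner_def sum_negf)

lemma cinner_scale_left: "cinner (c *s u) w = c * cinner u w"
  by (simp add: cinner_def sum_distrib_left mult.assoc)

lemma cinner_scale_right: "cinner w (c *s u) = cnj c * cinner w u"
  by (simp add: cinner_def sum_distrib_left algebra_simps)

lemma cinner_zero_left[simp]: "cinner 0 w = 0"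
  by (simp add: cinner_def)

lemma cinner_zero_right[simp]: "cinner w 0 = 0"
  by (simp add: cinner_def)

lemma cinner_sum_left: "finite S \<Longrightarrow> cinner (\<Sum>i\<in>S. f i) w = (\<Sum>i\<in>S. cinner (f i) w)"
  by (induct S rule: finite_induct) (auto simp: cinner_add_left)

lemma cinner_sum_right: "finite S \<Longrightarrow> cinner w (\<Sum>i\<in>S. f i) = (\<Sum>i\<in>S. cinner w (f i))"
  by (induct S rule: finite_induct) (auto simp: cinner_add_right)

lemma cinner_commute: "cinner v u = cnj (cinner u v)"
  by (simp add: cinner_def mult.commute)

lemma cinner_madj: "cinner (A *v u) v = cinner u (madj A *v v)"
proof -
  have "cinner (A *v u) v = (\<Sum>i\<in>UNIV. \<Sum>j\<in>UNIV. A $ i $ j * u $ j * cnj (v $ i))"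
    by (simp add: cinner_def mvec_nth sum_distrib_right)
  also have "\<dots> = (\<Sum>j\<in>UNIV. \<Sum>i\<in>UNIV. A $ i $ j * u $ j * cnj (v $ i))"
    by (rule sum.swap)
  also have "\<dots> = cinner u (madj A *v v)"
    by (simp add: cinner_def mvec_nth sum_distrib_left algebra_simps)
  finally show ?thesis .
qed

lemma cinner_madj2: "cinner u (A *v v) = cinner (madj A *v u) v"
  using cinner_madj[of "madj A" u v] by simp

lemma norm_sq_vec: "(norm (v::complex^'n::finite))\<^sup>2 = (\<Sum>i\<in>UNIV. (cmod (v $ i))\<^sup>2)"
  by (simp add: norm_vec_def L2_set_def sum_nonneg)

lemma cinner_self: "cinner v v = of_real ((norm v)\<^sup>2)"
  by (simp add: cinner_def norm_sq_vec complex_mult_cnj cmod_power2)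

lemma cinner_self_Re: "Re (cinner v v) = (norm v)\<^sup>2"
  by (simp add: cinner_self)

lemma cinner_self_Im: "Im (cinner v v) = 0"
  by (simp add: cinner_self)

lemma cmod_cinner: "cmod (cinner u v) \<le> norm u * norm v"
proof -
  have "cmod (cinner u v) \<le> (\<Sum>i\<in>UNIV. cmod (u $ i) * cmod (v $ i))"
    unfolding cinner_def by (rule order_trans[OF norm_sum]) (simp add: norm_mult)
  also have "\<dots> \<le> L2_set (\<lambda>i. cmod (u $ i)) UNIV * L2_set (\<lambda>i. cmod (v $ i)) UNIV"
    using L2_set_mult_ineq[where f="\<lambda>i. cmod (u$i)" and A=UNIV and g="\<lambda>i. cmod (v$i)"] by simp
  finally show ?thesis by (simp add: norm_vec_def)
qed

lemma cinner_eq_zero_self: "cinner v v = 0 \<longleftrightarrow> v = 0"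
  by (simp add: cinner_self)

lemma inv_props:
  assumes "invertible (M::'a::field^'n::finite^'n)"
  shows "M ** matrix_inv M = mat 1" "matrix_inv M ** M = mat 1"
proof -
  from assms obtain A' where "M ** A' = mat 1 \<and> A' ** M = mat 1" by (auto simp: invertible_def)
  hence "M ** matrix_inv M = mat 1 \<and> matrix_inv M ** M = mat 1"
    unfolding matrix_inv_def by (rule someI)
  thus "M ** matrix_inv M = mat 1" "matrix_inv M ** M = mat 1" by auto
qed

lemma inv_mvec1: assumes "invertible (M::'a::field^'n::finite^'n)" shows "M *v (matrix_inv M *v v) = (v::'a::field^'n::finite)"
  unfolding matrix_vector_mul_assoc using inv_props(1)[OF assms] by simp

lemma inv_mvec2: assumes "invertible (M::'a::field^'n::finite^'n)" shows "matrix_inv M *v (M *v v) = (v::'a::field^'n::finite)"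
  unfolding matrix_vector_mul_assoc using inv_props(2)[OF assms] by simp

lemma invertible_madj: "invertible M \<Longrightarrow> invertible (madj M)"
proof -
  assume "invertible M"
  hence "madj (matrix_inv M) ** madj M = mat 1" "madj M ** madj (matrix_inv M) = mat 1"
    using inv_props[of M] by (metis madj_mult madj_mat complex_cnj_one)+
  thus ?thesis unfolding invertible_def by blast
qed

lemma inv_unique_left: "invertible M \<Longrightarrow> X ** M = mat 1 \<Longrightarrow> X = matrix_inv (M::'a::field^'n::finite^'n)"
  by (metis inv_props(1) matrix_mul_assoc matrix_mul_lid matrix_mul_rid)

lemma inv_unique_right: "invertible M \<Longrightarrow> M ** X = mat 1 \<Longrightarrow> X = matrix_inv (M::'a::field^'n::finite^'n)"
  by (metis inv_props(2) matrix_mul_assoc matrix_mul_lid matrix_mul_rid)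

lemma madj_inv: "invertible M \<Longrightarrow> madj (matrix_inv M) = matrix_inv (madj M)"
  by (metis inv_props(2) inv_unique_right invertible_madj madj_mult madj_mat complex_cnj_one)

lemma injective_invertible:
  assumes "\<And>v. (M::complex^'n::finite^'n) *v v = 0 \<Longrightarrow> v = 0"
  shows "invertible M"
proof -
  have "inj ((*v) M)"
    by (rule injI) (metis assms mvec_diff right_minus_eq)
  then obtain B where "B ** M = mat 1"
    using matrix_left_invertible_injective by blast
  thus ?thesis
    using invertible_left_inverse by blast
qed

lemma herm_cinner: "hermitian M \<Longrightarrow> cinner (M *v u) v = cinner u (M *v v)"
  by (simp add: cinner_madj hermitian_def)

lemma cinner_adjA: "cinner (madj M *v u) v = cinner u (M *v v)"
  by (simp add: cinner_madj)

lemma inv_cancel: "invertible (M::complex^'n::finite^'n) \<Longrightarrow> M *v x = M *v y \<Longrightarrow> x = y"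
  by (metis inv_mvec2)

locale jac =
  fixes A B :: "nat \<Rightarrow> complex^'n::finite^'n" and P :: "nat \<Rightarrow> complex \<Rightarrow> complex^'n^'n"
    and z :: complex
  assumes A_inv: "\<And>n. invertible (A n)" and B_sa: "\<And>n. hermitian (B n)"
    and rec: "three_term P A B" and P0_inv: "\<And>w. invertible (P 0 w)"
    and divergent: "\<forall>w. Im w \<noteq> 0 \<longrightarrow> (\<forall>v::complex ^ 'n. v \<noteq> 0 \<longrightarrow>
                      \<not> summable (\<lambda>n. (norm (P n w *v v))\<^sup>2))"
    and z_nonreal: "Im z \<noteq> 0"
begin

abbreviation J where "J \<equiv> jacobi A B"

lemma J0: "J V 0 = A 0 *v V 1 + B 0 *v V 0"
  by (simp add: jacobi_def)

lemma JS: "J V (Suc n) = A (Suc n) *v V (Suc (Suc n)) + B (Suc n) *v V (Suc n) + madj (A n) *v V n"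
  by (simp add: jacobi_def)

lemma green:
  "(\<Sum>n\<le>M. cinner (J V n) (U n)) - (\<Sum>n\<le>M. cinner (V n) (J U n))
     = cinner (A M *v V (Suc M)) (U M) - cinner (V M) (A M *v U (Suc M))"
proof (induct M)
  case 0
  show ?case using herm_cinner[OF B_sa[of 0], of "V 0" "U 0"]
    by (simp add: J0 cinner_add_left cinner_add_right)
next
  case (Suc M)
  have e1: "cinner (madj (A M) *v V M) (U (Suc M)) = cinner (V M) (A M *v U (Suc M))"
    by (rule cinner_adjA)
  have e2: "cinner (V (Suc M)) (madj (A M) *v U M) = cinner (A M *v V (Suc M)) (U M)"
    by (simp add: cinner_madj)
  have e3: "cinner (B (Suc M) *v V (Suc M)) (U (Suc M)) = cinner (V (Suc M)) (B (Suc M) *v U (Suc M))"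
    by (rule herm_cinner[OF B_sa])
  show ?case
    using Suc e1 e2 e3
    by (simp add: JS cinner_add_left cinner_add_right algebra_simps)
qed

lemma J_local:
  assumes "U (n - 1) = V (n - 1)" "U n = V n" "U (Suc n) = V (Suc n)"
  shows "J U n = J V n"
  using assms by (simp add: jacobi_def)

lemma J_lin: "J (\<lambda>n. c *s U n + a *s V n) n = c *s J U n + a *s J V n"
  by (simp add: jacobi_def mvec_add mvec_scale algebra_simps vector_add_ldistrib)

lemma J_add: "J (\<lambda>n. U n + V n) n = J U n + J V n"
  by (simp add: jacobi_def mvec_add algebra_simps)

lemma J_diff: "J (\<lambda>n. U n - V n) n = J U n - J V n"
  by (simp add: jacobi_def mvec_diff algebra_simps)

lemma J_scale: "J (\<lambda>n. c *s U n) n = c *s J U n"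
  by (simp add: jacobi_def mvec_scale algebra_simps vector_add_ldistrib)

lemma J_zero: "J (\<lambda>n. 0) n = 0"
  by (simp add: jacobi_def)

lemma J_mvec: "J (\<lambda>n. P n w *v c) n = w *s (P n w *v c)"
proof (cases n)
  case 0
  have "smat w (P 0 w) = A 0 ** P 1 w + B 0 ** P 0 w" using rec by (simp add: three_term_def)
  hence "smat w (P 0 w) *v c = A 0 ** P 1 w *v c + B 0 ** P 0 w *v c" by (simp add: madd_mvec)
  thus ?thesis using 0 by (simp add: J0 smat_mvec matrix_vector_mul_assoc)
next
  case (Suc m)
  have "smat w (P (Suc m) w) = A (Suc m) ** P (Suc (Suc m)) w + B (Suc m) ** P (Suc m) w + madj (A m) ** P m w"
    using rec by (simp add: three_term_def)
  hence "smat w (P (Suc m) w) *v c = A (Suc m) ** P (Suc (Suc m)) w *v c + B (Suc m) ** P (Suc m) w *v c + madj (A m) ** P m w *v c"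
    by (simp add: madd_mvec)
  thus ?thesis using Suc by (simp add: JS smat_mvec matrix_vector_mul_assoc)
qed

lemma homog_solution:
  assumes h: "\<And>n. J U n = w *s U n"
  shows "U n = P n w *v (matrix_inv (P 0 w) *v U 0)"
proof -
  define c where "c = matrix_inv (P 0 w) *v U 0"
  have "U n = P n w *v c \<and> U (Suc n) = P (Suc n) w *v c" for n
  proof (induct n)
    case 0
    have u0: "U 0 = P 0 w *v c" unfolding c_def by (simp add: inv_mvec1 P0_inv)
    have "A 0 *v U 1 = w *s U 0 - B 0 *v U 0" using h[of 0] by (simp add: J0 algebra_simps)
    moreover have "A 0 *v (P 1 w *v c) = w *s (P 0 w *v c) - B 0 *v (P 0 w *v c)"
      using J_mvec[of w c 0] by (simp add: J0 algebra_simps)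
    ultimately have "U 1 = P 1 w *v c" using u0 inv_cancel[OF A_inv] by metis
    thus ?case using u0 by simp
  next
    case (Suc n)
    have "A (Suc n) *v U (Suc (Suc n)) = w *s U (Suc n) - B (Suc n) *v U (Suc n) - madj (A n) *v U n"
      using h[of "Suc n"] by (simp add: JS algebra_simps)
    moreover have "A (Suc n) *v (P (Suc (Suc n)) w *v c) = w *s (P (Suc n) w *v c) - B (Suc n) *v (P (Suc n) w *v c) - madj (A n) *v (P n w *v c)"
      using J_mvec[of w c "Suc n"] by (simp add: JS algebra_simps)
    ultimately have "U (Suc (Suc n)) = P (Suc (Suc n)) w *v c" using Suc inv_cancel[OF A_inv] by metis
    thus ?case using Suc by simp
  qed
  thus ?thesis unfolding c_def by blast
qed

lemma uniqueness:
  assumes "U \<in> l2" "\<And>n. J U n = z *s U n"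
  shows "U = (\<lambda>n. 0)"
proof -
  define c where "c = matrix_inv (P 0 z) *v U 0"
  have U: "U n = P n z *v c" for n using homog_solution[where w=z and U=U and n=n] assms(2) c_def by simp
  have "summable (\<lambda>n. (norm (P n z *v c))\<^sup>2)" using assms(1) U by (simp add: l2_def)
  hence "c = 0" using divergent z_nonreal by blast
  thus ?thesis using U by (simp add: fun_eq_iff)
qed


lemma energy:
  fixes X :: "'n seq" and M :: nat
  assumes X0: "\<And>n. n \<ge> M \<Longrightarrow> X n = 0"
  shows "(Im z)\<^sup>2 * (\<Sum>n<M. (norm (X n))\<^sup>2) \<le> (\<Sum>n<M. (norm (J X n - z *s X n))\<^sup>2)"
proof -
  define S where "S = (\<Sum>n<M. cinner (J X n) (X n))"
  define T where "T = (\<Sum>n<M. (norm (X n))\<^sup>2)"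
  define G where "G = (\<lambda>n. J X n - z *s X n)"
  have T0: "T \<ge> 0" unfolding T_def by (simp add: sum_nonneg)
  have sle: "(\<Sum>n\<le>M. f n) = (\<Sum>n<M. f n) + f M" for f :: "nat \<Rightarrow> complex"
    by (simp add: lessThan_Suc_atMost[symmetric])
  have "(\<Sum>n\<le>M. cinner (J X n) (X n)) - (\<Sum>n\<le>M. cinner (X n) (J X n)) = 0"
    using green[where V=X and M=M and U=X] X0[of M] by simp
  hence "S = (\<Sum>n<M. cinner (X n) (J X n))"
    unfolding S_def using X0[of M] by (simp add: sle)
  also have "\<dots> = cnj S" unfolding S_def by (simp add: cinner_commute[of "X _"])
  finally have "Im S = Im (cnj S)" by (rule arg_cong)
  hence ImS: "Im S = 0" by simp
  have "(\<Sum>n<M. cinner (G n) (X n)) = S - z * of_real T"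
    unfolding G_def S_def T_def by (simp add: cinner_diff_left cinner_scale_left cinner_self sum_subtractf sum_distrib_left)
  hence "Im (\<Sum>n<M. cinner (G n) (X n)) = - Im z * T" using ImS by simp
  hence "\<bar>Im z\<bar> * T = \<bar>Im (\<Sum>n<M. cinner (G n) (X n))\<bar>" using T0 by (simp add: abs_mult)
  also have "\<dots> \<le> cmod (\<Sum>n<M. cinner (G n) (X n))" by (rule abs_Im_le_cmod)
  also have "\<dots> \<le> (\<Sum>n<M. norm (G n) * norm (X n))"
    by (rule order_trans[OF norm_sum]) (intro sum_mono cmod_cinner)
  also have "\<dots> \<le> L2_set (\<lambda>n. norm (G n)) {..<M} * L2_set (\<lambda>n. norm (X n)) {..<M}"
    using L2_set_mult_ineq[where f="\<lambda>n. norm (G n)" and A="{..<M}" and g="\<lambda>n. norm (X n)"] by simp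
  also have "\<dots> = sqrt (\<Sum>n<M. (norm (G n))\<^sup>2) * sqrt T"
    unfolding L2_set_def T_def by simp
  finally have ineq: "\<bar>Im z\<bar> * T \<le> sqrt (\<Sum>n<M. (norm (G n))\<^sup>2) * sqrt T" .
  show ?thesis
  proof (cases "T = 0")
    case True thus ?thesis unfolding T_def by (simp add: sum_nonneg)
  next
    case False
    hence Tp: "T > 0" using T0 by simp
    have "\<bar>Im z\<bar> * sqrt T * sqrt T \<le> sqrt (\<Sum>n<M. (norm (G n))\<^sup>2) * sqrt T"
      using ineq Tp by (simp add: mult.assoc)
    hence "\<bar>Im z\<bar> * sqrt T \<le> sqrt (\<Sum>n<M. (norm (G n))\<^sup>2)"
      using Tp by (simp add: mult_le_cancel_right)
    hence "(\<bar>Im z\<bar> * sqrt T)\<^sup>2 \<le> (sqrt (\<Sum>n<M. (norm (G n))\<^sup>2))\<^sup>2"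
      by (rule power_mono) (use Tp in simp)
    thus ?thesis using Tp unfolding T_def G_def by (simp add: power_mult_distrib sum_nonneg)
  qed
qed

lemma P_inv: "invertible (P M z)"
proof (cases M)
  case 0 thus ?thesis using P0_inv by simp
next
  case (Suc m)
  show ?thesis
  proof (rule injective_invertible)
    fix a assume a: "P M z *v a = 0"
    define X where "X = (\<lambda>n. if n < M then P n z *v a else 0)"
    have X0: "X n = 0" if "n \<ge> M" for n using that by (simp add: X_def)
    have "J X n - z *s X n = 0" if "n < M" for n
    proof -
      have "X (Suc n) = P (Suc n) z *v a" using that a by (cases "Suc n = M") (auto simp: X_def)
      hence "J X n = J (\<lambda>n. P n z *v a) n"
        by (intro J_local) (use that in \<open>auto simp: X_def\<close>)
      thus ?thesis using that J_mvec[of z a n] by (simp add: X_def)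
    qed
    hence "(Im z)\<^sup>2 * (\<Sum>n<M. (norm (X n))\<^sup>2) \<le> 0" using energy[of M X, OF X0] by simp
    hence "(\<Sum>n<M. (norm (X n))\<^sup>2) = 0"
      using z_nonreal by (simp add: mult_le_0_iff sum_nonneg order.antisym)
    hence "(norm (X 0))\<^sup>2 = 0" using Suc by (subst (asm) sum_nonneg_eq_0_iff) auto
    hence "P 0 z *v a = 0" using Suc by (simp add: X_def)
    thus "a = 0" using inv_cancel[OF P0_inv, of z a 0] by simp
  qed
qed

end

fun rseq :: "(nat \<Rightarrow> complex^'n::finite^'n) \<Rightarrow> (nat \<Rightarrow> complex^'n^'n) \<Rightarrow> complex \<Rightarrow> 'n seq \<Rightarrow> nat \<Rightarrow> complex^'n" where
  "rseq A B z F 0 = 0"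
| "rseq A B z F (Suc 0) = matrix_inv (A 0) *v F 0"
| "rseq A B z F (Suc (Suc n)) = matrix_inv (A (Suc n)) *v
      (F (Suc n) - B (Suc n) *v rseq A B z F (Suc n) + z *s rseq A B z F (Suc n) - madj (A n) *v rseq A B z F n)"

context jac begin

lemma rseq_eq: "J (rseq A B z F) n - z *s rseq A B z F n = F n"
proof (cases n)
  case 0 thus ?thesis by (simp add: J0 inv_mvec1 A_inv)
next
  case (Suc m) thus ?thesis by (simp add: JS inv_mvec1 A_inv)
qed

definition trunc :: "'n seq \<Rightarrow> nat \<Rightarrow> 'n seq" where
  "trunc F M = (let a = - (matrix_inv (P M z) *v rseq A B z F M) in
      (\<lambda>n. if n < M then rseq A B z F n + P n z *v a else 0))"

lemma trunc_props:
  shows "\<And>n. n \<ge> M \<Longrightarrow> trunc F M n = 0"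
    and "\<And>n. n < M \<Longrightarrow> J (trunc F M) n - z *s trunc F M n = F n"
proof -
  define a where "a = - (matrix_inv (P M z) *v rseq A B z F M)"
  define Y where "Y = (\<lambda>n. rseq A B z F n + P n z *v a)"
  have tr: "trunc F M = (\<lambda>n. if n < M then Y n else 0)" unfolding trunc_def a_def Y_def Let_def by simp
  have YM: "Y M = 0" unfolding Y_def a_def by (simp add: mvec_uminus inv_mvec1 P_inv)
  have YJ: "J Y n - z *s Y n = F n" for n
    unfolding Y_def J_add J_mvec using rseq_eq[of F n] by (simp add: vector_add_ldistrib algebra_simps)
  show "\<And>n. n \<ge> M \<Longrightarrow> trunc F M n = 0" by (simp add: tr)
  fix n assume n: "n < M"
  have "trunc F M (Suc n) = Y (Suc n)" using n YM by (cases "Suc n = M") (auto simp: tr)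
  hence "J (trunc F M) n = J Y n"
    by (intro J_local) (use n in \<open>auto simp: tr\<close>)
  thus "J (trunc F M) n - z *s trunc F M n = F n" using YJ[of n] n by (simp add: tr)
qed

lemma trunc_bound:
  "(Im z)\<^sup>2 * (\<Sum>n<M. (norm (trunc F M n))\<^sup>2) \<le> (\<Sum>n<M. (norm (F n))\<^sup>2)"
  using energy[where M=M and X="trunc F M"] trunc_props[where M=M and F=F] by simp


lemma scale_mvec: "c *s (v::complex^'m::finite) = mat c *v v"
  by (simp add: mat_mvec)

lemma tendsto_J:
  assumes "\<And>n. (\<lambda>j. X j n) \<longlonglongrightarrow> U n"
  shows "(\<lambda>j. J (X j) n - z *s X j n) \<longlonglongrightarrow> J U n - z *s U n"
proof -
  have t: "(\<lambda>j. M *v X j k) \<longlonglongrightarrow> M *v U k" for M :: "complex^'n^'n" and k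
    by (rule bounded_linear.tendsto[OF matrix_vector_mul_bounded_linear assms])
  show ?thesis
    unfolding jacobi_def scale_mvec
    by (intro tendsto_intros t) (auto intro: t)
qed

lemma existence:
  assumes F: "F \<in> l2"
  shows "\<exists>U. U \<in> l2 \<and> (\<forall>n. J U n - z *s U n = F n) \<and> (Im z)\<^sup>2 * (\<Sum>n. (norm (U n))\<^sup>2) \<le> (\<Sum>n. (norm (F n))\<^sup>2)"
proof -
  define SF where "SF = (\<Sum>n. (norm (F n))\<^sup>2)"
  define K2 where "K2 = SF / (Im z)\<^sup>2"
  have sF: "summable (\<lambda>n. (norm (F n))\<^sup>2)" using F by (simp add: l2_def)
  have Imp: "(Im z)\<^sup>2 > 0" using z_nonreal by simp
  have b0: "(\<Sum>n<M. (norm (trunc F M n))\<^sup>2) \<le> K2" for M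
  proof -
    have "(\<Sum>n<M. (norm (F n))\<^sup>2) \<le> SF" unfolding SF_def by (rule sum_le_suminf[OF sF]) auto
    hence "(Im z)\<^sup>2 * (\<Sum>n<M. (norm (trunc F M n))\<^sup>2) \<le> SF" using trunc_bound[where M=M and F=F] by linarith
    thus ?thesis unfolding K2_def using Imp by (simp add: field_simps)
  qed
  have b1: "(\<Sum>n<L. (norm (trunc F M n))\<^sup>2) \<le> K2" for M L
  proof -
    have "(\<Sum>n<L. (norm (trunc F M n))\<^sup>2) \<le> (\<Sum>n<max L M. (norm (trunc F M n))\<^sup>2)"
      by (rule sum_mono2) auto
    also have "\<dots> = (\<Sum>n<M. (norm (trunc F M n))\<^sup>2)"
      by (rule sum.mono_neutral_right) (auto simp: trunc_props)
    finally show ?thesis using b0[of M] by linarith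
  qed
  have b2: "norm (trunc F M n) \<le> sqrt K2" for M n
  proof -
    have "(norm (trunc F M n))\<^sup>2 \<le> (\<Sum>k<Suc n. (norm (trunc F M k))\<^sup>2)"
      by (rule member_le_sum) auto
    hence "(norm (trunc F M n))\<^sup>2 \<le> K2" using b1[of M "Suc n"] by linarith
    thus ?thesis by (simp add: real_le_rsqrt)
  qed
  interpret S: subseqs "\<lambda>k s. convergent (\<lambda>j. trunc F (s j) k)"
  proof
    fix k and s :: "nat \<Rightarrow> nat" assume "strict_mono s"
    have "bounded (range (\<lambda>j. trunc F (s j) k))"
      unfolding bounded_iff using b2 by blast
    then obtain l r where "strict_mono r" "((\<lambda>j. trunc F (s j) k) \<circ> r) \<longlonglongrightarrow> l"
      using bounded_imp_convergent_subsequence by blast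
    thus "\<exists>r'. strict_mono r' \<and> convergent (\<lambda>j. trunc F ((s \<circ> r') j) k)"
      by (auto simp: convergent_def o_def)
  qed
  define \<sigma> where "\<sigma> = S.diagseq"
  have conv: "convergent (\<lambda>j. trunc F (\<sigma> j) k)" for k
  proof -
    have "convergent (\<lambda>j. trunc F ((S.diagseq \<circ> (+) (Suc k)) j) k)"
    proof (rule S.diagseq_holds)
      fix r s n assume "strict_mono (r::nat\<Rightarrow>nat)" "convergent (\<lambda>j. trunc F (s j) n)"
      thus "convergent (\<lambda>j. trunc F ((s \<circ> r) j) n)"
        using convergent_subseq_convergent[of "\<lambda>j. trunc F (s j) n" r] by (simp add: o_def)
    qed
    then obtain l where "(\<lambda>j. trunc F (S.diagseq (j + Suc k)) k) \<longlonglongrightarrow> l"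
      by (auto simp: convergent_def o_def add.commute)
    hence "(\<lambda>j. trunc F (S.diagseq j) k) \<longlonglongrightarrow> l"
      by (rule LIMSEQ_offset)
    thus ?thesis unfolding \<sigma>_def convergent_def by blast
  qed
  define U where "U = (\<lambda>n. lim (\<lambda>j. trunc F (\<sigma> j) n))"
  have lim: "(\<lambda>j. trunc F (\<sigma> j) n) \<longlonglongrightarrow> U n" for n
    using conv[of n] unfolding U_def by (simp add: convergent_LIMSEQ_iff)
  have sm: "strict_mono \<sigma>" unfolding \<sigma>_def by (rule S.subseq_diagseq)
  have eqn: "J U n - z *s U n = F n" for n
  proof -
    have t1: "(\<lambda>j. J (trunc F (\<sigma> j)) n - z *s trunc F (\<sigma> j) n) \<longlonglongrightarrow> J U n - z *s U n"
      by (rule tendsto_J) (rule lim)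
    have "eventually (\<lambda>j. J (trunc F (\<sigma> j)) n - z *s trunc F (\<sigma> j) n = F n) sequentially"
    proof (rule eventually_sequentiallyI[of "Suc n"])
      fix j assume "Suc n \<le> j"
      moreover have "j \<le> \<sigma> j" using sm by (rule seq_suble)
      ultimately show "J (trunc F (\<sigma> j)) n - z *s trunc F (\<sigma> j) n = F n"
        by (intro trunc_props(2)) simp
    qed
    hence t2: "(\<lambda>j. J (trunc F (\<sigma> j)) n - z *s trunc F (\<sigma> j) n) \<longlonglongrightarrow> F n"
      by (rule tendsto_eventually)
    show ?thesis using LIMSEQ_unique[OF t1 t2] .
  qed
  have pb: "(\<Sum>n<L. (norm (U n))\<^sup>2) \<le> K2" for L
  proof -
    have "(\<lambda>j. \<Sum>n<L. (norm (trunc F (\<sigma> j) n))\<^sup>2) \<longlonglongrightarrow> (\<Sum>n<L. (norm (U n))\<^sup>2)"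
      by (intro tendsto_intros lim)
    thus ?thesis by (rule LIMSEQ_le_const2) (use b1 in auto)
  qed
  have sU: "summable (\<lambda>n. (norm (U n))\<^sup>2)"
    by (rule summableI_nonneg_bounded[OF _ pb]) simp
  have "(\<Sum>n. (norm (U n))\<^sup>2) \<le> K2" by (rule suminf_le_const[OF sU pb])
  hence "(Im z)\<^sup>2 * (\<Sum>n. (norm (U n))\<^sup>2) \<le> SF" unfolding K2_def using Imp by (simp add: field_simps)
  thus ?thesis using sU eqn unfolding SF_def l2_def by blast
qed


lemma l2_add: "U \<in> l2 \<Longrightarrow> V \<in> l2 \<Longrightarrow> (\<lambda>n. U n + V n) \<in> l2"
proof -
  assume "U \<in> l2" "V \<in> l2"
  hence s: "summable (\<lambda>n. 2 * (norm (U n))\<^sup>2 + 2 * (norm (V n))\<^sup>2)"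
    by (auto simp: l2_def intro: summable_add summable_mult)
  have "(norm (U n + V n))\<^sup>2 \<le> 2 * (norm (U n))\<^sup>2 + 2 * (norm (V n))\<^sup>2" for n
  proof -
    have "(norm (U n + V n))\<^sup>2 \<le> (norm (U n) + norm (V n))\<^sup>2"
      by (rule power_mono[OF norm_triangle_ineq]) simp
    also have "\<dots> \<le> 2 * (norm (U n))\<^sup>2 + 2 * (norm (V n))\<^sup>2"
    proof -
      have "0 \<le> (norm (U n) - norm (V n))\<^sup>2" by simp
      thus ?thesis by (simp add: power2_eq_square algebra_simps)
    qed
    finally show ?thesis .
  qed
  thus ?thesis unfolding l2_def by (auto intro: summable_comparison_test'[OF s])
qed

lemma norm_scale_vec: "norm (c *s (v::complex^'m::finite)) = cmod c * norm v"
  by (simp add: norm_vec_def L2_set_def norm_mult power_mult_distrib sum_distrib_left[symmetric] real_sqrt_mult)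

lemma l2_scale: "U \<in> l2 \<Longrightarrow> (\<lambda>n. c *s U n) \<in> l2"
  by (simp add: l2_def norm_scale_vec power_mult_distrib summable_mult)

lemma l2_lin: "U \<in> l2 \<Longrightarrow> V \<in> l2 \<Longrightarrow> (\<lambda>n. c *s U n + a *s V n) \<in> l2"
  by (intro l2_add l2_scale)

lemma l2_diff: "U \<in> l2 \<Longrightarrow> V \<in> l2 \<Longrightarrow> (\<lambda>n. U n - V n) \<in> l2"
  using l2_lin[of U V 1 "-1"] by (simp add: vector_sneg_minus1[symmetric])

lemma l2_zero: "(\<lambda>n. 0) \<in> l2"
  by (simp add: l2_def)

lemma finseq_l2: "V \<in> finseq \<Longrightarrow> V \<in> l2"
proof -
  assume "V \<in> finseq"
  then obtain M where M: "\<forall>n\<ge>M. V n = 0" by (auto simp: finseq_def)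
  have "summable (\<lambda>n. (norm (V n))\<^sup>2)"
    by (rule summable_finite[of "{..<M}"]) (use M in auto)
  thus ?thesis by (simp add: l2_def)
qed

lemma l2_eventually: "U \<in> l2 \<Longrightarrow> \<forall>n\<ge>M. V n = U n \<Longrightarrow> V \<in> l2"
proof -
  assume "U \<in> l2" "\<forall>n\<ge>M. V n = U n"
  hence "eventually (\<lambda>n. (norm (V n))\<^sup>2 = (norm (U n))\<^sup>2) sequentially"
    by (auto simp: eventually_sequentially intro!: exI[of _ M])
  from summable_cong[OF this] show ?thesis using \<open>U \<in> l2\<close> unfolding l2_def by simp
qed

lemma l2_sum: "finite S \<Longrightarrow> (\<And>k. k \<in> S \<Longrightarrow> X k \<in> l2) \<Longrightarrow> (\<lambda>n. \<Sum>k\<in>S. X k n) \<in> l2"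
proof (induct S rule: finite_induct)
  case empty thus ?case by (simp add: l2_zero)
next
  case (insert x F) thus ?case using l2_add[of "X x" "\<lambda>n. \<Sum>k\<in>F. X k n"] by simp
qed

lemma J_sum: "finite S \<Longrightarrow> J (\<lambda>n. \<Sum>k\<in>S. X k n) m = (\<Sum>k\<in>S. J (X k) m)"
proof (induct S rule: finite_induct)
  case empty thus ?case by (simp add: J_zero)
next
  case (insert x F) thus ?case using J_add[of "X x" "\<lambda>n. \<Sum>k\<in>F. X k n" m] by simp
qed

lemma finseq_inner:
  assumes "\<forall>n\<ge>M. V n = 0"
  shows "l2_inner V U = (\<Sum>n<M. cinner (V n) (U n))"
  unfolding l2_inner_def by (rule suminf_finite) (use assms in auto)

lemma finseq_inner2:
  assumes "\<forall>n\<ge>M. V n = 0"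
  shows "l2_inner (J V) U = (\<Sum>n\<le>M. cinner (J V n) (U n))"
  unfolding l2_inner_def by (rule suminf_finite) (use assms in \<open>auto simp: jacobi_def\<close>)

lemma J_symm:
  assumes "V \<in> finseq"
  shows "l2_inner (J V) U = l2_inner V (J U)"
proof -
  obtain M where M: "\<forall>n\<ge>M. V n = 0" using assms by (auto simp: finseq_def)
  have "l2_inner V (J U) = (\<Sum>n<Suc M. cinner (V n) (J U n))"
    by (rule finseq_inner) (use M in auto)
  also have "\<dots> = (\<Sum>n\<le>M. cinner (V n) (J U n))" by (simp add: lessThan_Suc_atMost)
  finally show ?thesis using green[where V=V and M=M and U=U] M finseq_inner2[OF M, of U] by simp
qed

lemma test_eq:
  fixes Y Y' :: "'n seq"
  assumes "\<And>V. V \<in> finseq \<Longrightarrow> l2_inner V Y = l2_inner V Y'"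
  shows "Y = Y'"
proof
  fix n
  define d where "d = Y n - Y' n"
  define V where "V = (\<lambda>k. if k = n then d else 0)"
  have V: "\<forall>k\<ge>Suc n. V k = 0" by (simp add: V_def)
  hence "V \<in> finseq" by (auto simp: finseq_def)
  hence "l2_inner V Y = l2_inner V Y'" by (rule assms)
  have c: "cinner (V k) (X k) = (if k = n then cinner d (X k) else 0)" for k and X :: "'n seq"
    by (simp add: V_def)
  have "l2_inner V X = cinner d (X n)" for X :: "'n seq"
    unfolding finseq_inner[OF V] c by simp
  hence "l2_inner V Y = cinner d (Y n)" "l2_inner V Y' = cinner d (Y' n)" by auto
  with \<open>l2_inner V Y = l2_inner V Y'\<close> have "cinner d d = 0" unfolding d_def by (simp add: cinner_diff_right)
  thus "Y n = Y' n" unfolding d_def by (simp add: cinner_eq_zero_self)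
qed

lemma adj_dom: "jacobi_adj_dom A B = {U \<in> l2. J U \<in> l2}"
proof (intro set_eqI iffI)
  fix U assume "U \<in> jacobi_adj_dom A B"
  then obtain Y where U: "U \<in> l2" "Y \<in> l2" "\<forall>V\<in>finseq. l2_inner (J V) U = l2_inner V Y"
    by (auto simp: jacobi_adj_dom_def)
  have "Y = J U" by (rule test_eq) (use U J_symm in auto)
  thus "U \<in> {U \<in> l2. J U \<in> l2}" using U by simp
next
  fix U assume "U \<in> {U \<in> l2. J U \<in> l2}"
  thus "U \<in> jacobi_adj_dom A B" unfolding jacobi_adj_dom_def using J_symm by blast
qed

lemma adj_eq: "J U \<in> l2 \<Longrightarrow> jacobi_adj A B U = J U"
  unfolding jacobi_adj_def
proof (rule the_equality)
  assume "J U \<in> l2"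
  thus "J U \<in> l2 \<and> (\<forall>V\<in>finseq. l2_inner (J V) U = l2_inner V (J U))" using J_symm by blast
next
  fix Y assume "Y \<in> l2 \<and> (\<forall>V\<in>finseq. l2_inner (J V) U = l2_inner V Y)"
  thus "Y = J U" by (intro test_eq) (use J_symm in auto)
qed

definition Gres :: "'n seq \<Rightarrow> 'n seq" where
  "Gres F = (if F \<in> l2 then (THE U. U \<in> l2 \<and> (\<forall>n. J U n - z *s U n = F n)) else (\<lambda>n. 0))"

lemma uniq2:
  assumes "U \<in> l2" "\<forall>n. J U n - z *s U n = F n" "U' \<in> l2" "\<forall>n. J U' n - z *s U' n = F n"
  shows "U = U'"
proof -
  have "(\<lambda>n. U n - U' n) \<in> l2" by (rule l2_diff) (use assms in auto)
  moreover have "J (\<lambda>n. U n - U' n) n = z *s (U n - U' n)" for n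
  proof -
    have "J U n = F n + z *s U n" "J U' n = F n + z *s U' n" using assms(2,4) by (simp_all add: diff_eq_eq)
    thus ?thesis by (simp add: J_diff vector_ssub_ldistrib)
  qed
  ultimately have "(\<lambda>n. U n - U' n) = (\<lambda>n. 0)" by (rule uniqueness)
  thus ?thesis by (simp add: fun_eq_iff)
qed

lemma Gres_props:
  assumes "F \<in> l2"
  shows "Gres F \<in> l2" "\<And>n. J (Gres F) n - z *s Gres F n = F n"
    "(Im z)\<^sup>2 * (\<Sum>n. (norm (Gres F n))\<^sup>2) \<le> (\<Sum>n. (norm (F n))\<^sup>2)"
    "\<And>U. U \<in> l2 \<Longrightarrow> \<forall>n. J U n - z *s U n = F n \<Longrightarrow> Gres F = U"
proof -
  obtain U where U: "U \<in> l2" "\<forall>n. J U n - z *s U n = F n" "(Im z)\<^sup>2 * (\<Sum>n. (norm (U n))\<^sup>2) \<le> (\<Sum>n. (norm (F n))\<^sup>2)"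
    using existence[OF assms] by blast
  have "(THE U. U \<in> l2 \<and> (\<forall>n. J U n - z *s U n = F n)) = U"
    by (rule the_equality) (use U uniq2 in blast)+
  hence G: "Gres F = U" unfolding Gres_def using assms by simp
  show "Gres F \<in> l2" "\<And>n. J (Gres F) n - z *s Gres F n = F n"
    "(Im z)\<^sup>2 * (\<Sum>n. (norm (Gres F n))\<^sup>2) \<le> (\<Sum>n. (norm (F n))\<^sup>2)" using G U by auto
  show "\<And>U'. U' \<in> l2 \<Longrightarrow> \<forall>n. J U' n - z *s U' n = F n \<Longrightarrow> Gres F = U'"
    using G U uniq2 by blast
qed

lemma Gres_l2: "F \<in> l2 \<Longrightarrow> Gres F \<in> l2"
  using Gres_props by blast

lemma Gres_dom:
  assumes F: "F \<in> l2"
  shows "Gres F \<in> jacobi_adj_dom A B \<and> (\<lambda>n. jacobi_adj A B (Gres F) n - z *s Gres F n) = F"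
proof -
  have JG: "J (Gres F) = (\<lambda>n. F n + z *s Gres F n)"
    using Gres_props(2)[OF F] by (simp add: fun_eq_iff diff_eq_eq)
  hence JGl2: "J (Gres F) \<in> l2" using F Gres_props(1)[OF F] by (simp add: l2_add l2_scale)
  have "Gres F \<in> jacobi_adj_dom A B" using JGl2 Gres_props(1)[OF F] by (simp add: adj_dom)
  moreover have "jacobi_adj A B (Gres F) = J (Gres F)" using JGl2 by (rule adj_eq)
  ultimately show ?thesis using Gres_props(2)[OF F] by simp
qed

lemma Gres_lin:
  assumes F: "F \<in> l2" and H: "H \<in> l2"
  shows "Gres (\<lambda>n. c *s F n + a *s H n) = (\<lambda>n. c *s Gres F n + a *s Gres H n)"
proof (rule Gres_props(4))
  show "(\<lambda>n. c *s F n + a *s H n) \<in> l2" by (rule l2_lin[OF F H])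
  show "(\<lambda>n. c *s Gres F n + a *s Gres H n) \<in> l2" by (rule l2_lin) (use Gres_props F H in auto)
  show "\<forall>n. J (\<lambda>n. c *s Gres F n + a *s Gres H n) n - z *s (c *s Gres F n + a *s Gres H n) = c *s F n + a *s H n"
  proof
    fix n
    have e: "J (Gres F) n = F n + z *s Gres F n" "J (Gres H) n = H n + z *s Gres H n"
      using Gres_props(2)[OF F] Gres_props(2)[OF H] by (simp_all add: diff_eq_eq)
    have e2: "c *s (z *s x) = (c * z) *s x" "z *s (c *s x) = (c * z) *s x" for c and x :: "complex^'n"
      by (simp_all add: vector_smult_assoc mult.commute)
    show "J (\<lambda>n. c *s Gres F n + a *s Gres H n) n - z *s (c *s Gres F n + a *s Gres H n) = c *s F n + a *s H n"
      unfolding J_lin e vector_add_ldistrib e2 by simp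
  qed
qed

lemma Gres_bound:
  assumes F: "F \<in> l2"
  shows "l2_norm (Gres F) \<le> (1 / \<bar>Im z\<bar>) * l2_norm F"
proof -
  have "(\<Sum>n. (norm (Gres F n))\<^sup>2) \<le> (\<Sum>n. (norm (F n))\<^sup>2) / (Im z)\<^sup>2"
    using Gres_props(3)[OF F] z_nonreal by (simp add: field_simps)
  hence "sqrt (\<Sum>n. (norm (Gres F n))\<^sup>2) \<le> sqrt ((\<Sum>n. (norm (F n))\<^sup>2) / (Im z)\<^sup>2)"
    by (rule real_sqrt_le_mono)
  also have "\<dots> = (1 / \<bar>Im z\<bar>) * sqrt (\<Sum>n. (norm (F n))\<^sup>2)"
    by (simp add: real_sqrt_divide)
  finally show ?thesis unfolding l2_norm_def .
qed

lemma Gres_inv: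
  assumes U: "U \<in> jacobi_adj_dom A B"
  shows "Gres (\<lambda>n. jacobi_adj A B U n - z *s U n) = U"
proof -
  have U2: "U \<in> l2" "J U \<in> l2" using U by (auto simp: adj_dom)
  have F: "(\<lambda>n. J U n - z *s U n) \<in> l2" by (rule l2_diff) (use U2 l2_scale in auto)
  have "jacobi_adj A B U = J U" using U2(2) by (rule adj_eq)
  thus ?thesis using Gres_props(4)[OF F U2(1)] by simp
qed

lemma Gres_resolvent: "is_resolvent (jacobi_adj A B) (jacobi_adj_dom A B) z Gres"
  unfolding is_resolvent_def
  using Gres_l2 Gres_dom Gres_lin Gres_bound Gres_inv by blast

end

lemma madd_r: "((A::'a::semiring_1^'n::finite^'m::finite) + B) ** C = A ** C + B ** C"
  by (simp add: vec_eq_iff mmul_nth algebra_simps sum.distrib)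

lemma mdiff_r: "((A::'a::ring_1^'n::finite^'m::finite) - B) ** C = A ** C - B ** C"
  by (simp add: vec_eq_iff mmul_nth algebra_simps sum_subtractf)

lemma mdiff_l: "(C::'a::ring_1^'n::finite^'m::finite) ** (A - B) = C ** A - C ** B"
  by (simp add: vec_eq_iff mmul_nth algebra_simps sum_subtractf)

lemma mneg_l: "(C::'a::ring_1^'n::finite^'m::finite) ** (- A) = - (C ** A)"
  by (simp add: vec_eq_iff mmul_nth sum_negf)

lemma mneg_r: "(- (A::'a::ring_1^'n::finite^'m::finite)) ** C = - (A ** C)"
  by (simp add: vec_eq_iff mmul_nth sum_negf)

lemma mzero_l[simp]: "(0::'a::semiring_1^'n::finite^'m::finite) ** C = 0"
  by (simp add: vec_eq_iff mmul_nth)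

lemma mzero_r[simp]: "(C::'a::semiring_1^'n::finite^'m::finite) ** 0 = 0"
  by (simp add: vec_eq_iff mmul_nth)

lemmas mdist = matrix_add_ldistrib madd_r mdiff_r mdiff_l mneg_l mneg_r smat_mult_left smat_mult_right
  smat_add smat_diff madj_add madj_diff madj_uminus madj_smat madj_mult

lemma mvec_scaleR: "(M::complex^'n::finite^'m::finite) *v (r *\<^sub>R v) = r *\<^sub>R (M *v v)"
  by (simp add: vec_eq_iff mvec_nth scaleR_sum_right)

definition Wr :: "(nat \<Rightarrow> complex^'n::finite^'n) \<Rightarrow> (nat \<Rightarrow> complex^'n^'n) \<Rightarrow> (nat \<Rightarrow> complex^'n^'n) \<Rightarrow> nat \<Rightarrow> complex^'n^'n" where
  "Wr A X Y k = X k ** A k ** Y (Suc k) - X (Suc k) ** madj (A k) ** Y k"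

lemma wr_const:
  fixes A B X Y :: "nat \<Rightarrow> complex^'n::finite^'n"
  assumes row: "\<And>n. smat z (X (Suc n)) = X (Suc (Suc n)) ** madj (A (Suc n)) + X (Suc n) ** B (Suc n) + X n ** A n"
    and col: "\<And>n. smat z (Y (Suc n)) = A (Suc n) ** Y (Suc (Suc n)) + B (Suc n) ** Y (Suc n) + madj (A n) ** Y n"
  shows "Wr A X Y k = Wr A X Y 0"
proof (induct k)
  case 0 show ?case ..
next
  case (Suc k)
  have c: "A (Suc k) ** Y (Suc (Suc k)) = smat z (Y (Suc k)) - B (Suc k) ** Y (Suc k) - madj (A k) ** Y k"
    using col[of k] by (simp add: algebra_simps)
  have r: "X (Suc (Suc k)) ** madj (A (Suc k)) = smat z (X (Suc k)) - X (Suc k) ** B (Suc k) - X k ** A k"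
    using row[of k] by (simp add: algebra_simps)
  have "Wr A X Y (Suc k) = X (Suc k) ** (A (Suc k) ** Y (Suc (Suc k))) - (X (Suc (Suc k)) ** madj (A (Suc k))) ** Y (Suc k)"
    by (simp add: Wr_def matrix_mul_assoc)
  also have "\<dots> = X (Suc k) ** (smat z (Y (Suc k)) - B (Suc k) ** Y (Suc k) - madj (A k) ** Y k)
      - (smat z (X (Suc k)) - X (Suc k) ** B (Suc k) - X k ** A k) ** Y (Suc k)"
    by (simp only: c r)
  also have "\<dots> = Wr A X Y k"
    by (simp add: Wr_def mdist matrix_mul_assoc algebra_simps)
  finally show ?case using Suc by simp
qed


locale jacF = jac A B P z for A B :: "nat \<Rightarrow> complex^'n::finite^'n" and P and z +
  fixes Fm :: "nat \<Rightarrow> complex \<Rightarrow> complex^'n^'n"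
  assumes F1: "\<And>w n. Im w \<noteq> 0 \<Longrightarrow> smat w (Fm (Suc n) w) = A (Suc n) ** Fm (Suc (Suc n)) w + B (Suc n) ** Fm (Suc n) w + madj (A n) ** Fm n w"
    and F0: "\<And>w. Im w \<noteq> 0 \<Longrightarrow> A 0 ** Fm 1 w + B 0 ** Fm 0 w - smat w (Fm 0 w) = matrix_inv (madj (P 0 (cnj w)))"
    and FS: "madj (Fm 0 (cnj z)) ** matrix_inv (madj (P 0 (cnj z))) = matrix_inv (P 0 z) ** Fm 0 z"
    and Bessel: "\<And>y. summable (\<lambda>n. (norm (Fm n z *v y))\<^sup>2)"
begin

abbreviation "Pz n \<equiv> P n z"
abbreviation "Fz n \<equiv> Fm n z"
abbreviation "Pt n \<equiv> madj (P n (cnj z))"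
abbreviation "Ft n \<equiv> madj (Fm n (cnj z))"

lemma zc: "Im (cnj z) \<noteq> 0" using z_nonreal by simp

lemma Pcol0: "smat w (P 0 w) = A 0 ** P 1 w + B 0 ** P 0 w"
  using rec by (simp add: three_term_def)

lemma PcolS: "smat w (P (Suc n) w) = A (Suc n) ** P (Suc (Suc n)) w + B (Suc n) ** P (Suc n) w + madj (A n) ** P n w"
  using rec by (simp add: three_term_def)

lemma Bh: "madj (B n) = B n" using B_sa by (simp add: hermitian_def)

lemma Prow0: "smat z (Pt 0) = Pt 1 ** madj (A 0) + Pt 0 ** B 0"
  using arg_cong[OF Pcol0[of "cnj z"], of madj] by (simp add: mdist Bh)

lemma ProwS: "smat z (Pt (Suc n)) = Pt (Suc (Suc n)) ** madj (A (Suc n)) + Pt (Suc n) ** B (Suc n) + Pt n ** A n"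
  using arg_cong[OF PcolS[of "cnj z" n], of madj] by (simp add: mdist Bh)

lemma FrowS: "smat z (Ft (Suc n)) = Ft (Suc (Suc n)) ** madj (A (Suc n)) + Ft (Suc n) ** B (Suc n) + Ft n ** A n"
  using arg_cong[OF F1[OF zc, of n], of madj] by (simp add: mdist Bh)

lemma Frow0: "Ft 1 ** madj (A 0) + Ft 0 ** B 0 - smat z (Ft 0) = matrix_inv (P 0 z)"
proof -
  have "madj (matrix_inv (madj (P 0 z))) = matrix_inv (P 0 z)"
    using madj_inv[OF invertible_madj[OF P0_inv[of z]]] by simp
  thus ?thesis using arg_cong[OF F0[OF zc], of madj] by (simp add: mdist Bh)
qed

lemma Fcol0: "A 0 ** Fz 1 + B 0 ** Fz 0 - smat z (Fz 0) = matrix_inv (Pt 0)"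
  using F0[OF z_nonreal] .

lemma c0: "A 0 ** Fz 1 = matrix_inv (Pt 0) - B 0 ** Fz 0 + smat z (Fz 0)"
proof -
  have "A 0 ** Fz 1 = (A 0 ** Fz 1 + B 0 ** Fz 0 - smat z (Fz 0)) - B 0 ** Fz 0 + smat z (Fz 0)" by simp
  also have "\<dots> = matrix_inv (Pt 0) - B 0 ** Fz 0 + smat z (Fz 0)" by (simp only: Fcol0)
  finally show ?thesis .
qed

lemma r0: "Ft 1 ** madj (A 0) = matrix_inv (Pz 0) - Ft 0 ** B 0 + smat z (Ft 0)"
proof -
  have "Ft 1 ** madj (A 0) = (Ft 1 ** madj (A 0) + Ft 0 ** B 0 - smat z (Ft 0)) - Ft 0 ** B 0 + smat z (Ft 0)" by simp
  also have "\<dots> = matrix_inv (Pz 0) - Ft 0 ** B 0 + smat z (Ft 0)" by (simp only: Frow0)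
  finally show ?thesis .
qed

lemma c0P: "A 0 ** Pz 1 = smat z (Pz 0) - B 0 ** Pz 0"
  using Pcol0[of z] by simp

lemma r0P: "Pt 1 ** madj (A 0) = smat z (Pt 0) - Pt 0 ** B 0"
  using Prow0 by simp

lemma Ptinv: "invertible (Pt 0)" by (rule invertible_madj[OF P0_inv])

lemma W1: "Wr A Pt Pz k = 0"
proof -
  have "Wr A Pt Pz k = Wr A Pt Pz 0" by (rule wr_const[where X="\<lambda>n. madj (P n (cnj z))" and Y="\<lambda>n. P n z" and B=B and z=z, OF ProwS PcolS[of z]])
  also have "\<dots> = Pt 0 ** (A 0 ** Pz 1) - (Pt 1 ** madj (A 0)) ** Pz 0"
    by (simp add: Wr_def matrix_mul_assoc)
  also have "\<dots> = Pt 0 ** (smat z (Pz 0) - B 0 ** Pz 0) - (smat z (Pt 0) - Pt 0 ** B 0) ** Pz 0"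
    using Pcol0[of z] Prow0 by (simp add: algebra_simps)
  also have "\<dots> = 0" by (simp add: mdist matrix_mul_assoc)
  finally show ?thesis .
qed

lemma W3: "Wr A Pt Fz k = mat 1"
proof -
  have "Wr A Pt Fz k = Wr A Pt Fz 0" by (rule wr_const[where X="\<lambda>n. madj (P n (cnj z))" and Y="\<lambda>n. Fm n z" and B=B and z=z, OF ProwS F1[OF z_nonreal]])
  also have "\<dots> = Pt 0 ** (A 0 ** Fz 1) - (Pt 1 ** madj (A 0)) ** Fz 0"
    by (simp add: Wr_def matrix_mul_assoc)
  also have "\<dots> = Pt 0 ** (matrix_inv (Pt 0) - B 0 ** Fz 0 + smat z (Fz 0)) - (smat z (Pt 0) - Pt 0 ** B 0) ** Fz 0"
    by (simp only: c0 r0P)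
  also have "\<dots> = Pt 0 ** matrix_inv (Pt 0)" by (simp add: mdist matrix_mul_assoc)
  also have "\<dots> = mat 1" by (rule inv_props(1)[OF Ptinv])
  finally show ?thesis .
qed

lemma W4: "Wr A Ft Pz k = - mat 1"
proof -
  have "Wr A Ft Pz k = Wr A Ft Pz 0" by (rule wr_const[where X="\<lambda>n. madj (Fm n (cnj z))" and Y="\<lambda>n. P n z" and B=B and z=z, OF FrowS PcolS[of z]])
  also have "\<dots> = Ft 0 ** (A 0 ** Pz 1) - (Ft 1 ** madj (A 0)) ** Pz 0"
    by (simp add: Wr_def matrix_mul_assoc)
  also have "\<dots> = Ft 0 ** (smat z (Pz 0) - B 0 ** Pz 0) - (matrix_inv (Pz 0) - Ft 0 ** B 0 + smat z (Ft 0)) ** Pz 0"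
    by (simp only: c0P r0)
  also have "\<dots> = - (matrix_inv (Pz 0) ** Pz 0)" by (simp add: mdist matrix_mul_assoc)
  also have "\<dots> = - mat 1" by (simp add: inv_props(2)[OF P0_inv])
  finally show ?thesis .
qed

lemma W2: "Wr A Ft Fz k = 0"
proof -
  have "Wr A Ft Fz k = Wr A Ft Fz 0" by (rule wr_const[where X="\<lambda>n. madj (Fm n (cnj z))" and Y="\<lambda>n. Fm n z" and B=B and z=z, OF FrowS F1[OF z_nonreal]])
  also have "\<dots> = Ft 0 ** (A 0 ** Fz 1) - (Ft 1 ** madj (A 0)) ** Fz 0"
    by (simp add: Wr_def matrix_mul_assoc)
  also have "\<dots> = Ft 0 ** (matrix_inv (Pt 0) - B 0 ** Fz 0 + smat z (Fz 0)) - (matrix_inv (Pz 0) - Ft 0 ** B 0 + smat z (Ft 0)) ** Fz 0"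
    by (simp only: c0 r0)
  also have "\<dots> = Ft 0 ** matrix_inv (Pt 0) - matrix_inv (Pz 0) ** Fz 0" by (simp add: mdist matrix_mul_assoc)
  also have "\<dots> = 0" using FS by simp
  finally show ?thesis .
qed


lemma Wr_mvec: "Wr A X Y k *v v = X k *v (A k *v (Y (Suc k) *v v)) - X (Suc k) *v (madj (A k) *v (Y k *v v))"
  by (simp add: Wr_def mdiff_mvec matrix_vector_mul_assoc matrix_mul_assoc)

lemma muminus_mvec: "(- (M::'a::ring_1^'n::finite^'m::finite)) *v v = - (M *v v)"
  by (simp add: vec_eq_iff mvec_nth sum_negf)

lemma transfer:
  shows "Pz k *v (Ft k *v w) = Fz k *v (Pt k *v w)"
    and "A k *v (Fz (Suc k) *v (Pt k *v w)) - A k *v (Pz (Suc k) *v (Ft k *v w)) = w"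
proof -
  define T :: "(complex^'n) \<times> (complex^'n) \<Rightarrow> (complex^'n) \<times> (complex^'n)" where
    "T p = (Pz k *v fst p + Fz k *v snd p, A k *v (Pz (Suc k) *v fst p + Fz (Suc k) *v snd p))" for p
  define L :: "(complex^'n) \<times> (complex^'n) \<Rightarrow> (complex^'n) \<times> (complex^'n)" where
    "L p = (Ft (Suc k) *v (madj (A k) *v fst p) - Ft k *v snd p,
            Pt k *v snd p - Pt (Suc k) *v (madj (A k) *v fst p))" for p
  have LT: "L (T p) = p" for p
  proof -
    obtain a b where p: "p = (a, b)" by (cases p)
    have w1: "- (Wr A Ft Pz k *v a) - Wr A Ft Fz k *v b = a" using W4[of k] W2[of k] by (simp add: mat_mvec muminus_mvec)
    have w2: "Wr A Pt Pz k *v a + Wr A Pt Fz k *v b = b" using W1[of k] W3[of k] by (simp add: mat_mvec muminus_mvec)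
    show ?thesis
      using w1 w2 unfolding p T_def L_def Wr_mvec
      by (simp add: mvec_add mvec_diff mvec_uminus algebra_simps)
  qed
  have lin: "linear T"
  proof (rule linearI)
    fix x y show "T (x + y) = T x + T y" by (simp add: T_def mvec_add algebra_simps)
  next
    fix r :: real and x show "T (r *\<^sub>R x) = r *\<^sub>R T x"
      by (simp add: T_def mvec_add mvec_scaleR scaleR_add_right)
  qed
  have inj: "inj T" by (metis LT injI)
  have surj: "surj T" by (rule linear_injective_imp_surjective[OF lin inj]) simp
  have TL: "T (L p) = p" for p
  proof -
    obtain q where "p = T q" using surj by (metis surjD)
    thus ?thesis using LT by simp
  qed
  have e: "T (L (0, w)) = (0, w)" by (rule TL)
  have L0: "L (0, w) = (- (Ft k *v w), Pt k *v w)" by (simp add: L_def)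
  from e have e1: "Pz k *v (- (Ft k *v w)) + Fz k *v (Pt k *v w) = 0"
    and e2: "A k *v (Pz (Suc k) *v (- (Ft k *v w)) + Fz (Suc k) *v (Pt k *v w)) = w"
    unfolding L0 T_def by simp_all
  from e1 show "Pz k *v (Ft k *v w) = Fz k *v (Pt k *v w)" by (simp add: mvec_uminus add.commute add_eq_0_iff)
  from e2 show "A k *v (Fz (Suc k) *v (Pt k *v w)) - A k *v (Pz (Suc k) *v (Ft k *v w)) = w"
    by (simp add: mvec_uminus mvec_add algebra_simps)
qed


lemma J_F: "J (\<lambda>m. Fz m *v b) (Suc m) = z *s (Fz (Suc m) *v b)"
proof -
  have "smat z (Fz (Suc m)) *v b = A (Suc m) ** Fz (Suc (Suc m)) *v b + B (Suc m) ** Fz (Suc m) *v b + madj (A m) ** Fz m *v b"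
    using F1[OF z_nonreal, of m] by (simp add: madd_mvec)
  thus ?thesis by (simp add: JS smat_mvec matrix_vector_mul_assoc)
qed

definition col :: "nat \<Rightarrow> complex^'n \<Rightarrow> 'n seq" where
  "col k w n = (if n \<le> k then Pz n *v (Ft k *v w) else Fz n *v (Pt k *v w))"

lemma col_tail: "n \<ge> k \<Longrightarrow> col k w n = Fz n *v (Pt k *v w)"
  using transfer(1)[of k w] by (auto simp: col_def)

lemma col_l2: "col k w \<in> l2"
proof (rule l2_eventually)
  show "(\<lambda>n. Fz n *v (Pt k *v w)) \<in> l2" using Bessel by (simp add: l2_def)
  show "\<forall>n\<ge>k. col k w n = Fz n *v (Pt k *v w)" using col_tail by blast
qed

lemma col_eq: "J (col k w) n - z *s col k w n = (if n = k then w else 0)"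
proof -
  define c where "c = Ft k *v w"
  define b where "b = Pt k *v w"
  consider "n < k" | "n = k" | "n > k" by linarith
  thus ?thesis
  proof cases
    case 1
    have "J (col k w) n = J (\<lambda>m. Pz m *v c) n"
      by (rule J_local) (use 1 in \<open>auto simp: col_def c_def\<close>)
    thus ?thesis using 1 J_mvec[of z c n] by (simp add: col_def c_def)
  next
    case 3
    then obtain m where m: "n = Suc m" "m \<ge> k" by (cases n) auto
    have "J (col k w) n = J (\<lambda>m. Fz m *v b) n"
      by (rule J_local) (use m in \<open>auto simp: col_tail b_def\<close>)
    thus ?thesis using m J_F[of b m] by (simp add: col_tail b_def)
  next
    case 2
    have ck: "col k w k = Pz k *v c" "col k w (Suc k) = Fz (Suc k) *v b"
      "k > 0 \<Longrightarrow> col k w (k - 1) = Pz (k - 1) *v c"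
      by (auto simp: col_def c_def b_def)
    have "J (col k w) k = J (\<lambda>m. Pz m *v c) k - A k *v (Pz (Suc k) *v c) + A k *v (Fz (Suc k) *v b)"
      using ck by (simp add: jacobi_def)
    also have "\<dots> = z *s (Pz k *v c) + (A k *v (Fz (Suc k) *v b) - A k *v (Pz (Suc k) *v c))"
      by (simp add: J_mvec algebra_simps)
    also have "\<dots> = z *s (Pz k *v c) + w" using transfer(2)[of k w] by (simp add: b_def c_def)
    finally show ?thesis using 2 ck by simp
  qed
qed

lemma scale_sum_vec: "finite S \<Longrightarrow> c *s (\<Sum>k\<in>S. f k) = (\<Sum>k\<in>S. c *s (f k :: complex^'n))"
  by (induct S rule: finite_induct) (auto simp: vector_add_ldistrib)

lemma Gres_finseq:
  assumes M: "\<forall>n\<ge>M. V n = 0"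
  shows "Gres V = (\<lambda>n. \<Sum>k<M. col k (V k) n)"
proof (rule Gres_props(4))
  show "V \<in> l2" by (rule finseq_l2) (use M in \<open>auto simp: finseq_def\<close>)
  show "(\<lambda>n. \<Sum>k<M. col k (V k) n) \<in> l2" by (rule l2_sum) (auto intro: col_l2)
  show "\<forall>n. J (\<lambda>n. \<Sum>k<M. col k (V k) n) n - z *s (\<Sum>k<M. col k (V k) n) = V n"
  proof
    fix n
    have "J (\<lambda>n. \<Sum>k<M. col k (V k) n) n - z *s (\<Sum>k<M. col k (V k) n)
        = (\<Sum>k<M. J (col k (V k)) n - z *s col k (V k) n)"
      by (simp add: J_sum scale_sum_vec sum_subtractf)
    also have "\<dots> = (\<Sum>k<M. if n = k then V k else 0)" by (simp add: col_eq)
    also have "\<dots> = V n" using M by (auto simp: not_less)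
    finally show "J (\<lambda>n. \<Sum>k<M. col k (V k) n) n - z *s (\<Sum>k<M. col k (V k) n) = V n" .
  qed
qed

end

lemma norm_axis_eq: "norm (axis i (c::'a::real_normed_vector)) = norm c"
proof -
  have "(\<Sum>j\<in>UNIV. (norm (axis i c $ j))\<^sup>2) = (norm c)\<^sup>2"
    by (simp add: axis_def if_distrib[of norm] if_distrib[of "\<lambda>x. x\<^sup>2"] cong: if_cong)
  thus ?thesis by (simp add: norm_vec_def L2_set_def)
qed

lemma bounded_linear_axis: "bounded_linear (axis i :: 'a::real_normed_vector \<Rightarrow> 'a^'n::finite)"
proof (rule bounded_linear_intro[where K=1])
  show "axis i (x + y) = axis i x + axis i y" for x y :: 'a by (simp add: vec_eq_iff axis_def)
  show "axis i (r *\<^sub>R x) = r *\<^sub>R axis i x" for r and x :: 'a by (simp add: vec_eq_iff axis_def)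
  show "norm (axis i x) \<le> norm x * 1" for x :: 'a by (simp add: norm_axis_eq)
qed

lemma vec_axis_sum: "(\<Sum>i\<in>UNIV. axis i (g i)) = (\<chi> i. (g i :: 'a::comm_monoid_add))"
  by (simp add: vec_eq_iff sum_component axis_def)

lemma axis_sum: "finite S \<Longrightarrow> axis i (\<Sum>j\<in>S. g j) = (\<Sum>j\<in>S. axis i (g j :: 'a::comm_monoid_add))"
  by (induct S rule: finite_induct) (auto simp: vec_eq_iff axis_def)

lemma vec_axis_sum2: "(\<Sum>i\<in>UNIV. axis i (v $ i)) = (v::'a::comm_monoid_add^'n::finite)"
  using vec_axis_sum[of "\<lambda>i. v $ i"] by (simp add: vec_nth_inverse)

lemma mat_axis_sum: "(M::'a::comm_monoid_add^'n::finite^'m::finite) = (\<Sum>i\<in>UNIV. \<Sum>j\<in>UNIV. axis i (axis j (M $ i $ j)))"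
proof -
  have "(\<Sum>i\<in>UNIV. \<Sum>j\<in>UNIV. axis i (axis j (M $ i $ j))) = (\<Sum>i\<in>UNIV. axis i (\<Sum>j\<in>UNIV. axis j (M $ i $ j)))"
    by (simp only: axis_sum[OF finite])
  also have "\<dots> = (\<Sum>i\<in>UNIV. axis i (M $ i))" by (simp only: vec_axis_sum2)
  also have "\<dots> = M" by (rule vec_axis_sum2)
  finally show ?thesis ..
qed

definition mom :: "real measure \<Rightarrow> (real \<Rightarrow> complex) \<Rightarrow> bool" where
  "mom M g \<longleftrightarrow> g \<in> borel_measurable M \<and> (\<forall>k::nat. integrable M (\<lambda>x. \<bar>x\<bar>^k * cmod (g x)))"

locale meas =
  fixes \<tau> :: "real measure"
  assumes sets_tau: "sets \<tau> = sets borel"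
begin

lemma bm_eq: "borel_measurable \<tau> = borel_measurable borel"
  by (rule measurable_cong_sets[OF sets_tau refl])

lemma id_meas[measurable]: "(\<lambda>x. x) \<in> borel_measurable \<tau>"
  unfolding bm_eq by simp

lemma mom_integrable:
  assumes "mom \<tau> g" shows "integrable \<tau> g"
proof (rule Bochner_Integration.integrable_bound[where f="\<lambda>x. \<bar>x\<bar>^0 * cmod (g x)"])
  show "integrable \<tau> (\<lambda>x. \<bar>x\<bar>^0 * cmod (g x))" using assms unfolding mom_def by blast
  show "g \<in> borel_measurable \<tau>" using assms unfolding mom_def by blast
  show "AE x in \<tau>. norm (g x) \<le> norm (\<bar>x\<bar>^0 * cmod (g x))" by simp
qed

lemma mom_meas: "mom \<tau> g \<Longrightarrow> g \<in> borel_measurable \<tau>"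
  unfolding mom_def by simp

lemma mom_zero: "mom \<tau> (\<lambda>x. 0)"
  by (simp add: mom_def)

lemma mom_intro:
  assumes "g \<in> borel_measurable \<tau>" "\<And>k. integrable \<tau> (\<lambda>x. h k x)"
    "\<And>k x. \<bar>x\<bar>^k * cmod (g x) \<le> h k x"
  shows "mom \<tau> g"
  unfolding mom_def
proof (intro conjI allI)
  show "g \<in> borel_measurable \<tau>" by fact
  fix k :: nat
  have [measurable]: "g \<in> borel_measurable \<tau>" by fact
  show "integrable \<tau> (\<lambda>x. \<bar>x\<bar>^k * cmod (g x))"
  proof (rule Bochner_Integration.integrable_bound[OF assms(2)[of k]])
    show "(\<lambda>x. \<bar>x\<bar> ^ k * cmod (g x)) \<in> borel_measurable \<tau>" by measurable
    show "AE x in \<tau>. norm (\<bar>x\<bar> ^ k * cmod (g x)) \<le> norm (h k x)"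
    proof (rule AE_I2)
      fix x
      have a: "0 \<le> \<bar>x\<bar>^k * cmod (g x)" by simp
      have b: "\<bar>x\<bar>^k * cmod (g x) \<le> h k x" by (rule assms(3))
      have c: "0 \<le> h k x" using a b by linarith
      show "norm (\<bar>x\<bar> ^ k * cmod (g x)) \<le> norm (h k x)"
        unfolding real_norm_def abs_of_nonneg[OF a] abs_of_nonneg[OF c] by (rule b)
    qed
  qed
qed

lemma mom_add:
  assumes "mom \<tau> f" "mom \<tau> g" shows "mom \<tau> (\<lambda>x. f x + g x)"
proof (rule mom_intro[where h="\<lambda>k x. \<bar>x\<bar>^k * cmod (f x) + \<bar>x\<bar>^k * cmod (g x)"])
  have [measurable]: "f \<in> borel_measurable \<tau>" "g \<in> borel_measurable \<tau>" using assms by (auto simp: mom_def)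
  show "(\<lambda>x. f x + g x) \<in> borel_measurable \<tau>" by measurable
  show "integrable \<tau> (\<lambda>x. \<bar>x\<bar>^k * cmod (f x) + \<bar>x\<bar>^k * cmod (g x))" for k
  proof (rule Bochner_Integration.integrable_add)
    show "integrable \<tau> (\<lambda>x. \<bar>x\<bar>^k * cmod (f x))" using assms(1) unfolding mom_def by blast
    show "integrable \<tau> (\<lambda>x. \<bar>x\<bar>^k * cmod (g x))" using assms(2) unfolding mom_def by blast
  qed
  show "\<bar>x\<bar>^k * cmod (f x + g x) \<le> \<bar>x\<bar>^k * cmod (f x) + \<bar>x\<bar>^k * cmod (g x)" for k x
    by (auto simp: distrib_left[symmetric] intro!: mult_left_mono norm_triangle_ineq)
qed

lemma mom_cmult:
  assumes "mom \<tau> g" shows "mom \<tau> (\<lambda>x. c * g x)"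
proof (rule mom_intro[where h="\<lambda>k x. cmod c * (\<bar>x\<bar>^k * cmod (g x))"])
  have [measurable]: "g \<in> borel_measurable \<tau>" using assms by (auto simp: mom_def)
  show "(\<lambda>x. c * g x) \<in> borel_measurable \<tau>" by measurable
  show "integrable \<tau> (\<lambda>x. cmod c * (\<bar>x\<bar>^k * cmod (g x)))" for k
  proof (rule integrable_mult_right)
    show "integrable \<tau> (\<lambda>x. \<bar>x\<bar>^k * cmod (g x))" using assms(1) unfolding mom_def by blast
  qed
  show "\<bar>x\<bar>^k * cmod (c * g x) \<le> cmod c * (\<bar>x\<bar>^k * cmod (g x))" for k x
    by (simp add: norm_mult)
qed

lemma mom_xmult:
  assumes "mom \<tau> g" shows "mom \<tau> (\<lambda>x. of_real x * g x)"
proof (rule mom_intro[where h="\<lambda>k x. \<bar>x\<bar>^(Suc k) * cmod (g x)"])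
  have [measurable]: "g \<in> borel_measurable \<tau>" using assms by (auto simp: mom_def)
  show "(\<lambda>x. of_real x * g x) \<in> borel_measurable \<tau>" by measurable
  show "integrable \<tau> (\<lambda>x. \<bar>x\<bar>^(Suc k) * cmod (g x))" for k
    using assms unfolding mom_def by blast
  show "\<bar>x\<bar>^k * cmod (of_real x * g x) \<le> \<bar>x\<bar>^(Suc k) * cmod (g x)" for k x
    by (simp add: norm_mult)
qed

lemma mom_bounded:
  assumes "mom \<tau> g" "r \<in> borel_measurable \<tau>" "\<And>x. cmod (r x) \<le> R"
  shows "mom \<tau> (\<lambda>x. r x * g x)"
proof (rule mom_intro[where h="\<lambda>k x. R * (\<bar>x\<bar>^k * cmod (g x))"])
  have [measurable]: "g \<in> borel_measurable \<tau>" "r \<in> borel_measurable \<tau>" using assms by (auto simp: mom_def)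
  show "(\<lambda>x. r x * g x) \<in> borel_measurable \<tau>" by measurable
  show "integrable \<tau> (\<lambda>x. R * (\<bar>x\<bar>^k * cmod (g x)))" for k
  proof (rule integrable_mult_right)
    show "integrable \<tau> (\<lambda>x. \<bar>x\<bar>^k * cmod (g x))" using assms(1) unfolding mom_def by blast
  qed
  show "\<bar>x\<bar>^k * cmod (r x * g x) \<le> R * (\<bar>x\<bar>^k * cmod (g x))" for k x
  proof -
    have "\<bar>x\<bar>^k * cmod (r x * g x) = cmod (r x) * (\<bar>x\<bar>^k * cmod (g x))" by (simp add: norm_mult)
    also have "\<dots> \<le> R * (\<bar>x\<bar>^k * cmod (g x))" by (rule mult_right_mono[OF assms(3)]) simp
    finally show ?thesis .
  qed
qed

lemma mom_cnj:
  assumes "mom \<tau> g" shows "mom \<tau> (\<lambda>x. cnj (g x))"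
proof (rule mom_intro[where h="\<lambda>k x. \<bar>x\<bar>^k * cmod (g x)"])
  have gm[measurable]: "g \<in> borel_measurable \<tau>" using assms unfolding mom_def by blast
  have m1: "(\<lambda>x. Re (g x)) \<in> borel_measurable \<tau>" by measurable
  have m2: "(\<lambda>x. - Im (g x)) \<in> borel_measurable \<tau>" by measurable
  show "(\<lambda>x. cnj (g x)) \<in> borel_measurable \<tau>"
    by (rule borel_measurable_complex_iff[THEN iffD2]) (use m1 m2 in simp)
  show "integrable \<tau> (\<lambda>x. \<bar>x\<bar>^k * cmod (g x))" for k using assms unfolding mom_def by blast
  show "\<bar>x\<bar>^k * cmod (cnj (g x)) \<le> \<bar>x\<bar>^k * cmod (g x)" for k x by simp
qed

lemma mom_sum: "finite S \<Longrightarrow> (\<And>i. i \<in> S \<Longrightarrow> mom \<tau> (f i)) \<Longrightarrow> mom \<tau> (\<lambda>x. \<Sum>i\<in>S. f i x)"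
proof (induct S rule: finite_induct)
  case empty thus ?case by (simp add: mom_zero)
next
  case (insert a S) thus ?case using mom_add[of "f a" "\<lambda>x. \<Sum>i\<in>S. f i x"] by simp
qed

lemma mom_pow: "mom \<tau> g \<Longrightarrow> mom \<tau> (\<lambda>x. (of_real x)^j * g x)"
proof (induct j)
  case 0 thus ?case by simp
next
  case (Suc j)
  have "mom \<tau> (\<lambda>x. of_real x * ((of_real x)^j * g x))" by (rule mom_xmult[OF Suc(1)[OF Suc(2)]])
  thus ?case by (simp add: mult.assoc)
qed

end

definition polyfun :: "(real \<Rightarrow> complex) \<Rightarrow> bool" where
  "polyfun p \<longleftrightarrow> (\<exists>N c. \<forall>x. p x = (\<Sum>j\<le>N. c j * (of_real x)^j))"

lemma polyfun_cnj: "polyfun p \<Longrightarrow> polyfun (\<lambda>x. cnj (p x))"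
  unfolding polyfun_def
proof (elim exE)
  fix N c assume "\<forall>x. p x = (\<Sum>j\<le>N. c j * (of_real x)^j)"
  hence h: "cnj (p x) = (\<Sum>j\<le>N. cnj (c j) * (of_real x)^j)" for x by simp
  show "\<exists>N c. \<forall>x. cnj (p x) = (\<Sum>j\<le>N. c j * (of_real x)^j)"
    by (intro exI[of _ N] exI[of _ "\<lambda>j. cnj (c j)"] allI h)
qed

context meas begin

lemma mom_poly: "polyfun p \<Longrightarrow> mom \<tau> g \<Longrightarrow> mom \<tau> (\<lambda>x. p x * g x)"
proof -
  assume "polyfun p" "mom \<tau> g"
  then obtain N c where p: "\<And>x. p x = (\<Sum>j\<le>N. c j * (of_real x)^j)" by (auto simp: polyfun_def)
  have "mom \<tau> (\<lambda>x. \<Sum>j\<le>N. c j * ((of_real x)^j * g x))"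
    by (intro mom_sum mom_cmult mom_pow \<open>mom \<tau> g\<close>) simp
  thus ?thesis by (simp add: p sum_distrib_right mult.assoc)
qed

end


definition polymat :: "(real \<Rightarrow> complex^'n::finite^'m::finite) \<Rightarrow> bool" where
  "polymat p \<longleftrightarrow> (\<forall>i j. polyfun (\<lambda>x. p x $ i $ j))"

lemma polymat_madj: "polymat p \<Longrightarrow> polymat (\<lambda>x. madj (p x))"
  unfolding polymat_def by (simp add: polyfun_cnj)

lemma polymat_P:
  assumes "matrix_poly_seq P" shows "polymat (\<lambda>x. P n (of_real x))"
proof -
  obtain C where C: "\<And>n z. P n z = (\<Sum>j\<le>n. smat (z ^ j) (C n j))" using assms by (auto simp: matrix_poly_seq_def)
  show ?thesis unfolding polymat_def polyfun_def
  proof (intro allI)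
    fix i j
    show "\<exists>N c. \<forall>x. P n (complex_of_real x) $ i $ j = (\<Sum>l\<le>N. c l * complex_of_real x ^ l)"
      by (intro exI[of _ n] exI[of _ "\<lambda>l. C n l $ i $ j"] allI) (simp add: C sum_component mult.commute)
  qed
qed

lemma mmom_nth: "((A::complex^'k::finite^'m::finite) ** B) $ i $ j = (\<Sum>k\<in>UNIV. A $ i $ k * B $ k $ j)"
  by (simp add: mmul_nth)

lemma bl_entry: "bounded_linear (\<lambda>M::'a::real_normed_vector^'n::finite^'m::finite. M $ i $ j)"
  using bounded_linear_compose[OF bounded_linear_vec_nth[of j] bounded_linear_vec_nth[of i]] by simp

lemma bl_axis2: "bounded_linear (\<lambda>c::'a::real_normed_vector. (axis i (axis j c) :: 'a^'n::finite^'m::finite))"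
  using bounded_linear_compose[OF bounded_linear_axis[of i] bounded_linear_axis[of j]] by simp

context meas begin

definition mmom :: "(real \<Rightarrow> complex^'n::finite^'m::finite) \<Rightarrow> bool" where
  "mmom f \<longleftrightarrow> (\<forall>i j. mom \<tau> (\<lambda>x. f x $ i $ j))"

lemma mmom_integrable:
  assumes "mmom f" shows "integrable \<tau> f"
proof -
  have e: "f = (\<lambda>x. \<Sum>i\<in>UNIV. \<Sum>j\<in>UNIV. axis i (axis j (f x $ i $ j)))"
    by (rule ext, rule mat_axis_sum)
  have "integrable \<tau> (\<lambda>x. axis i (axis j (f x $ i $ j)) :: complex^_^_)" for i j
    using integrable_bounded_linear[OF bl_axis2 mom_integrable] assms unfolding mmom_def by blast
  hence "integrable \<tau> (\<lambda>x. \<Sum>i\<in>UNIV. \<Sum>j\<in>UNIV. axis i (axis j (f x $ i $ j)) :: complex^_^_)"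
    by (intro Bochner_Integration.integrable_sum) auto
  thus ?thesis using e by simp
qed

lemma mmom_entry:
  assumes "mmom f" shows "integral\<^sup>L \<tau> f $ i $ j = integral\<^sup>L \<tau> (\<lambda>x. f x $ i $ j)"
  using integral_bounded_linear[OF bl_entry mmom_integrable[OF assms], of i j] by simp

lemma mmom_add: "mmom f \<Longrightarrow> mmom g \<Longrightarrow> mmom (\<lambda>x. f x + g x)"
  unfolding mmom_def by (simp add: mom_add)

lemma mom_cmult_right: "mom \<tau> g \<Longrightarrow> mom \<tau> (\<lambda>x. g x * c)"
  using mom_cmult[of g c] by (simp add: mult.commute)

lemma mom_neg: "mom \<tau> g \<Longrightarrow> mom \<tau> (\<lambda>x. - g x)"
  using mom_cmult[of g "-1"] by simp

lemma mmom_uminus: "mmom f \<Longrightarrow> mmom (\<lambda>x. - f x)"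
  unfolding mmom_def by (simp add: mom_neg)

lemma mmom_diff: "mmom f \<Longrightarrow> mmom g \<Longrightarrow> mmom (\<lambda>x. f x - g x)"
  using mmom_add[of f "\<lambda>x. - g x"] mmom_uminus[of g] by simp

lemma mmom_sum: "finite S \<Longrightarrow> (\<And>k. k \<in> S \<Longrightarrow> mmom (f k)) \<Longrightarrow> mmom (\<lambda>x. \<Sum>k\<in>S. f k x)"
  unfolding mmom_def by (simp add: sum_component mom_sum)

lemma mmom_lmult: "mmom f \<Longrightarrow> mmom (\<lambda>x. K ** f x)"
  unfolding mmom_def mmom_nth by (auto intro!: mom_sum mom_cmult)

lemma mmom_rmult: "mmom f \<Longrightarrow> mmom (\<lambda>x. f x ** K)"
  unfolding mmom_def mmom_nth by (auto intro!: mom_sum mom_cmult simp: mult.commute)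

lemma mmom_smat:
  assumes "mmom f" "r \<in> borel_measurable \<tau>" "\<And>x. cmod (r x) \<le> R"
  shows "mmom (\<lambda>x. smat (r x) (f x))"
  using assms unfolding mmom_def by (auto intro!: mom_bounded)

lemma mmom_smatc: "mmom f \<Longrightarrow> mmom (\<lambda>x. smat c (f x))"
  unfolding mmom_def by (auto intro!: mom_cmult)

lemma mmom_madj: "mmom f \<Longrightarrow> mmom (\<lambda>x. madj (f x))"
  unfolding mmom_def by (auto intro!: mom_cnj)

lemma mmom_pl: "polymat p \<Longrightarrow> mmom f \<Longrightarrow> mmom (\<lambda>x. p x ** f x)"
  unfolding mmom_def polymat_def mmom_nth by (auto intro!: mom_sum mom_poly)

lemma mmom_pr: "polymat p \<Longrightarrow> mmom f \<Longrightarrow> mmom (\<lambda>x. f x ** p x)"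
  unfolding mmom_def polymat_def mmom_nth by (subst mult.commute) (auto intro!: mom_sum mom_poly)

lemma mmom_eqI:
  assumes "\<And>i j. integral\<^sup>L \<tau> (\<lambda>x. f x $ i $ j) = X $ i $ j" "mmom f"
  shows "integral\<^sup>L \<tau> f = X"
  using assms(1) mmom_entry[OF assms(2)] by (simp add: vec_eq_iff)

lemma I_add: "mmom f \<Longrightarrow> mmom g \<Longrightarrow> integral\<^sup>L \<tau> (\<lambda>x. f x + g x) = integral\<^sup>L \<tau> f + integral\<^sup>L \<tau> g"
  by (intro Bochner_Integration.integral_add mmom_integrable)

lemma I_diff: "mmom f \<Longrightarrow> mmom g \<Longrightarrow> integral\<^sup>L \<tau> (\<lambda>x. f x - g x) = integral\<^sup>L \<tau> f - integral\<^sup>L \<tau> g"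
  by (intro Bochner_Integration.integral_diff mmom_integrable)

lemma I_sum: "finite S \<Longrightarrow> (\<And>k. k \<in> S \<Longrightarrow> mmom (f k)) \<Longrightarrow> integral\<^sup>L \<tau> (\<lambda>x. \<Sum>k\<in>S. f k x) = (\<Sum>k\<in>S. integral\<^sup>L \<tau> (f k))"
  by (intro Bochner_Integration.integral_sum mmom_integrable)

lemma I_lmult:
  assumes f: "mmom f" shows "integral\<^sup>L \<tau> (\<lambda>x. K ** f x) = K ** integral\<^sup>L \<tau> f"
proof (rule mmom_eqI[OF _ mmom_lmult[OF f]])
  fix i j
  have "integral\<^sup>L \<tau> (\<lambda>x. (K ** f x) $ i $ j) = integral\<^sup>L \<tau> (\<lambda>x. \<Sum>k\<in>UNIV. K $ i $ k * f x $ k $ j)"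
    by (simp add: mmul_nth)
  also have "\<dots> = (\<Sum>k\<in>UNIV. K $ i $ k * integral\<^sup>L \<tau> (\<lambda>x. f x $ k $ j))"
    using f unfolding mmom_def
    by (subst Bochner_Integration.integral_sum) (auto intro!: mom_integrable mom_cmult)
  also have "\<dots> = (K ** integral\<^sup>L \<tau> f) $ i $ j"
    by (simp add: mmul_nth mmom_entry[OF f])
  finally show "integral\<^sup>L \<tau> (\<lambda>x. (K ** f x) $ i $ j) = (K ** integral\<^sup>L \<tau> f) $ i $ j" .
qed

lemma I_rmult:
  assumes f: "mmom f" shows "integral\<^sup>L \<tau> (\<lambda>x. f x ** K) = integral\<^sup>L \<tau> f ** K"
proof (rule mmom_eqI[OF _ mmom_rmult[OF f]])
  fix i j
  have "integral\<^sup>L \<tau> (\<lambda>x. (f x ** K) $ i $ j) = integral\<^sup>L \<tau> (\<lambda>x. \<Sum>k\<in>UNIV. f x $ i $ k * K $ k $ j)"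
    by (simp add: mmul_nth)
  also have "\<dots> = (\<Sum>k\<in>UNIV. integral\<^sup>L \<tau> (\<lambda>x. f x $ i $ k) * K $ k $ j)"
    using f unfolding mmom_def
    by (subst Bochner_Integration.integral_sum) (auto intro!: mom_integrable mom_cmult_right)
  also have "\<dots> = (integral\<^sup>L \<tau> f ** K) $ i $ j"
    by (simp add: mmul_nth mmom_entry[OF f])
  finally show "integral\<^sup>L \<tau> (\<lambda>x. (f x ** K) $ i $ j) = (integral\<^sup>L \<tau> f ** K) $ i $ j" .
qed

lemma I_smatc: "mmom f \<Longrightarrow> integral\<^sup>L \<tau> (\<lambda>x. smat c (f x)) = smat c (integral\<^sup>L \<tau> f)"
  using I_lmult[of f "mat c"] by (simp add: smat_mat_left)

lemma I_madj:
  assumes f: "mmom f" shows "integral\<^sup>L \<tau> (\<lambda>x. madj (f x)) = madj (integral\<^sup>L \<tau> f)"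
proof (rule mmom_eqI[OF _ mmom_madj[OF f]])
  fix i j
  show "integral\<^sup>L \<tau> (\<lambda>x. madj (f x) $ i $ j) = madj (integral\<^sup>L \<tau> f) $ i $ j"
    by (simp add: mmom_entry[OF f] integral_cnj)
qed

lemma I_cong:
  assumes "mmom f" "mmom g" "AE x in \<tau>. f x = g x"
  shows "integral\<^sup>L \<tau> f = integral\<^sup>L \<tau> g"
  using assms by (intro integral_cong_AE) (auto intro: borel_measurable_integrable mmom_integrable)

lemma I_cinner:
  fixes f :: "real \<Rightarrow> complex^'n::finite^'n" and y :: "complex^'n"
  assumes f: "mmom f"
  shows "cinner (integral\<^sup>L \<tau> f *v y) y = integral\<^sup>L \<tau> (\<lambda>x. cinner (f x *v y) y)"
proof -
  have e: "cinner (M *v y) y = (\<Sum>i\<in>UNIV. \<Sum>j\<in>UNIV. M $ i $ j * (y $ j * cnj (y $ i)))" for M :: "complex^'n^'n"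
    by (simp add: cinner_def mvec_nth sum_distrib_right mult.assoc)
  have "integral\<^sup>L \<tau> (\<lambda>x. cinner (f x *v y) y) = (\<Sum>i\<in>UNIV. \<Sum>j\<in>UNIV. integral\<^sup>L \<tau> (\<lambda>x. f x $ i $ j) * (y $ j * cnj (y $ i)))"
  proof -
    have m: "mom \<tau> (\<lambda>x. f x $ i $ j * c)" for i j c using f unfolding mmom_def by (intro mom_cmult_right) blast
    have "integral\<^sup>L \<tau> (\<lambda>x. \<Sum>i\<in>UNIV. \<Sum>j\<in>UNIV. f x $ i $ j * (y $ j * cnj (y $ i)))
        = (\<Sum>i\<in>UNIV. integral\<^sup>L \<tau> (\<lambda>x. \<Sum>j\<in>UNIV. f x $ i $ j * (y $ j * cnj (y $ i))))"
      by (rule Bochner_Integration.integral_sum) (auto intro!: mom_integrable mom_sum m)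
    also have "\<dots> = (\<Sum>i\<in>UNIV. \<Sum>j\<in>UNIV. integral\<^sup>L \<tau> (\<lambda>x. f x $ i $ j * (y $ j * cnj (y $ i))))"
      by (intro sum.cong refl Bochner_Integration.integral_sum mom_integrable m)
    also have "\<dots> = (\<Sum>i\<in>UNIV. \<Sum>j\<in>UNIV. integral\<^sup>L \<tau> (\<lambda>x. f x $ i $ j) * (y $ j * cnj (y $ i)))"
      by simp
    finally show ?thesis unfolding e .
  qed
  thus ?thesis unfolding e by (simp add: mmom_entry[OF f])
qed


lemma cinner_integrable:
  fixes f :: "real \<Rightarrow> complex^'n::finite^'n" and y :: "complex^'n"
  assumes f: "mmom f"
  shows "integrable \<tau> (\<lambda>x. cinner (f x *v y) y)"
proof -
  have e: "cinner (M *v y) y = (\<Sum>i\<in>UNIV. \<Sum>j\<in>UNIV. M $ i $ j * (y $ j * cnj (y $ i)))" for M :: "complex^'n^'n"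
    by (simp add: cinner_def mvec_nth sum_distrib_right mult.assoc)
  have m: "mom \<tau> (\<lambda>x. f x $ i $ j * c)" for i j c using f unfolding mmom_def by (intro mom_cmult_right) blast
  show ?thesis unfolding e by (auto intro!: mom_integrable mom_sum m)
qed

end

lemma smat_neg: "smat (- c) M = - smat c M"
  by (simp add: vec_eq_iff)

lemma smat_one_mult: "smat c (mat 1) ** X = smat c X"
  by (simp add: smat_mult_left)

lemma mult_smat_one: "X ** smat c (mat 1) = smat c X"
  by (simp add: smat_mult_right)

lemma msum_l: "finite S \<Longrightarrow> (K::'a::semiring_1^'n::finite^'m::finite) ** (\<Sum>i\<in>S. f i) = (\<Sum>i\<in>S. K ** f i)"
  by (induct S rule: finite_induct) (auto simp: matrix_add_ldistrib)

lemma msum_r: "finite S \<Longrightarrow> (\<Sum>i\<in>S. f i) ** (K::'a::semiring_1^'n::finite^'m::finite) = (\<Sum>i\<in>S. f i ** K)"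
  by (induct S rule: finite_induct) (auto simp: madd_r)

lemma smat_sum: "finite S \<Longrightarrow> smat c (\<Sum>i\<in>S. f i) = (\<Sum>i\<in>S. smat c (f i))"
  by (induct S rule: finite_induct) (auto simp: smat_add)

lemma rbound:
  assumes "Im w \<noteq> 0"
  shows "cmod (1 / (complex_of_real x - w)) \<le> 1 / \<bar>Im w\<bar>"
proof -
  have "\<bar>Im w\<bar> \<le> cmod (complex_of_real x - w)"
    using abs_Im_le_cmod[of "complex_of_real x - w"] by simp
  moreover have "\<bar>Im w\<bar> > 0" using assms by simp
  ultimately show ?thesis by (simp add: norm_divide divide_simps)
qed

locale ana =
  fixes \<tau> :: "real measure" and W :: "real \<Rightarrow> complex^'n::finite^'n"
    and P :: "nat \<Rightarrow> complex \<Rightarrow> complex^'n^'n" and A B :: "nat \<Rightarrow> complex^'n^'n"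
  assumes std: "standing_assumptions \<tau> W" and orth: "orthonormal_polys \<tau> W P"
    and rec: "three_term P A B"
begin

sublocale meas \<tau>
  using std by unfold_locales (simp add: standing_assumptions_def)

lemma W_mom: "mom \<tau> (\<lambda>x. W x $ i $ j)"
proof -
  have ir: "integrable \<tau> (\<lambda>x. x ^ k * Re (W x $ i $ j))" and ii: "integrable \<tau> (\<lambda>x. x ^ k * Im (W x $ i $ j))" for k
    using std by (auto simp: standing_assumptions_def)
  have "(\<lambda>x. Re (W x $ i $ j)) \<in> borel_measurable \<tau>" using borel_measurable_integrable[OF ir[of 0]] by simp
  moreover have "(\<lambda>x. Im (W x $ i $ j)) \<in> borel_measurable \<tau>" using borel_measurable_integrable[OF ii[of 0]] by simp
  ultimately have m: "(\<lambda>x. W x $ i $ j) \<in> borel_measurable \<tau>" by (simp add: borel_measurable_complex_iff)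
  show ?thesis
  proof (rule mom_intro[OF m, where h="\<lambda>k x. \<bar>x ^ k * Re (W x $ i $ j)\<bar> + \<bar>x ^ k * Im (W x $ i $ j)\<bar>"])
    show "integrable \<tau> (\<lambda>x. \<bar>x ^ k * Re (W x $ i $ j)\<bar> + \<bar>x ^ k * Im (W x $ i $ j)\<bar>)" for k
      by (intro Bochner_Integration.integrable_add integrable_abs ir ii)
    show "\<bar>x\<bar> ^ k * cmod (W x $ i $ j) \<le> \<bar>x ^ k * Re (W x $ i $ j)\<bar> + \<bar>x ^ k * Im (W x $ i $ j)\<bar>" for k x
    proof -
      have "\<bar>x\<bar> ^ k * cmod (W x $ i $ j) \<le> \<bar>x\<bar> ^ k * (\<bar>Re (W x $ i $ j)\<bar> + \<bar>Im (W x $ i $ j)\<bar>)"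
        by (rule mult_left_mono[OF cmod_le]) simp
      thus ?thesis by (simp add: abs_mult power_abs distrib_left)
    qed
  qed
qed

lemma W_mmom: "mmom W"
  unfolding mmom_def using W_mom by blast

lemma mps: "matrix_poly_seq P" using orth by (simp add: orthonormal_polys_def)

lemma polyP: "polymat (\<lambda>x. P n (of_real x))"
  by (rule polymat_P[OF mps])

lemma polyPadj: "polymat (\<lambda>x. madj (P n (of_real x)))"
  by (rule polymat_madj[OF polyP])

definition C0 where "C0 = P 0 0"

lemma P0c: "P 0 w = C0"
proof -
  obtain C where C: "\<And>n z. P n z = (\<Sum>j\<le>n. smat (z ^ j) (C n j))" "\<And>n. invertible (C n n)"
    using mps by (auto simp: matrix_poly_seq_def)
  show ?thesis unfolding C0_def by (simp add: C)
qed

lemma C0inv: "invertible C0"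
proof -
  obtain C where C: "\<And>n z. P n z = (\<Sum>j\<le>n. smat (z ^ j) (C n j))" "\<And>n. invertible (C n n)"
    using mps by (auto simp: matrix_poly_seq_def)
  show ?thesis unfolding C0_def using C(2)[of 0] by (simp add: C(1))
qed

lemma P0inv: "invertible (P 0 w)" using C0inv by (simp add: P0c)

lemma rmeas: "(\<lambda>x. 1 / (complex_of_real x - w)) \<in> borel_measurable \<tau>"
  by measurable

lemma rmeas2: "(\<lambda>x. cnj (1 / (complex_of_real x - w)) * (1 / (complex_of_real x - w))) \<in> borel_measurable \<tau>"
proof -
  have "(\<lambda>x. (1 / (complex_of_real x - cnj w)) * (1 / (complex_of_real x - w))) \<in> borel_measurable \<tau>"
    by measurable
  thus ?thesis by simp
qed

lemma mm_PW: "mmom (\<lambda>x. P n (of_real x) ** W x)"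
  by (rule mmom_pl[OF polyP W_mmom])

lemma mm_rPW: "Im w \<noteq> 0 \<Longrightarrow> mmom (\<lambda>x. smat (1 / (of_real x - w)) (P n (of_real x) ** W x))"
  by (rule mmom_smat[OF mm_PW rmeas rbound])

lemma mm_rW: "Im w \<noteq> 0 \<Longrightarrow> mmom (\<lambda>x. smat (1 / (of_real x - w)) (W x))"
  by (rule mmom_smat[OF W_mmom rmeas rbound])

definition Fi where "Fi n w = integral\<^sup>L \<tau> (\<lambda>x. smat (1 / (of_real x - w)) (P n (of_real x) ** W x))"

lemma Ffun_int:
  assumes w: "Im w \<noteq> 0"
  shows "Ffun \<tau> W P n w = Fi n w"
proof -
  define r where "r = (\<lambda>x::real. 1 / (complex_of_real x - w))"
  have rr: "1 / (w - complex_of_real x) = - r x" for x unfolding r_def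
    by (metis divide_minus_right minus_diff_eq)
  have mK: "mmom (\<lambda>x. smat (r x) (P n w ** W x))"
    unfolding r_def by (rule mmom_smat[OF mmom_lmult[OF W_mmom] rmeas rbound[OF w]])
  have m2: "mmom (\<lambda>x. smat (r x) (P n (of_real x) ** W x))" unfolding r_def by (rule mm_rPW[OF w])
  have "Qfun \<tau> W P n w = integral\<^sup>L \<tau> (\<lambda>x. smat (r x) (P n (of_real x) ** W x) - smat (r x) (P n w ** W x))"
    unfolding Qfun_def
    by (rule Bochner_Integration.integral_cong[OF refl]) (simp add: rr smat_neg smat_mult_left mdiff_r smat_diff)
  also have "\<dots> = Fi n w - integral\<^sup>L \<tau> (\<lambda>x. smat (r x) (P n w ** W x))"
    by (subst I_diff[OF m2 mK]) (simp add: Fi_def r_def)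
  finally have Q: "Qfun \<tau> W P n w = Fi n w - integral\<^sup>L \<tau> (\<lambda>x. smat (r x) (P n w ** W x))" .
  have "P n w ** Sfun \<tau> W w = integral\<^sup>L \<tau> (\<lambda>x. P n w ** smat (r x) (W x))"
    unfolding Sfun_def r_def by (rule I_lmult[OF mm_rW[OF w], symmetric])
  also have "\<dots> = integral\<^sup>L \<tau> (\<lambda>x. smat (r x) (P n w ** W x))" by (simp add: smat_mult_right)
  finally show ?thesis using Q by (simp add: Ffun_def)
qed


lemma mm_PWP: "mmom (\<lambda>x. P n (of_real x) ** W x ** madj (P m (of_real x)))"
  by (rule mmom_pr[OF polyPadj mm_PW])

lemma orthI: "integral\<^sup>L \<tau> (\<lambda>x. P n (of_real x) ** W x ** madj (P m (of_real x))) = (if n = m then mat 1 else 0)"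
  using orth by (simp add: orthonormal_polys_def)

lemma intPW: "integral\<^sup>L \<tau> (\<lambda>x. P n (of_real x) ** W x) = (if n = 0 then matrix_inv (madj C0) else 0)"
proof -
  have "integral\<^sup>L \<tau> (\<lambda>x. P n (of_real x) ** W x) ** madj C0 = (if n = 0 then mat 1 else 0)"
    using orthI[of n 0] I_rmult[OF mm_PW, of n "madj C0"] by (simp add: P0c)
  moreover have ic: "invertible (madj C0)" by (rule invertible_madj[OF C0inv])
  ultimately show ?thesis
  proof (cases "n = 0")
    case True thus ?thesis using \<open>_ ** madj C0 = _\<close> ic inv_unique_left by auto
  next
    case False
    hence "integral\<^sup>L \<tau> (\<lambda>x. P n (of_real x) ** W x) ** madj C0 ** matrix_inv (madj C0) = 0"
      using \<open>_ ** madj C0 = _\<close> by simp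
    thus ?thesis using False by (simp add: matrix_mul_assoc[symmetric] inv_props(1)[OF ic])
  qed
qed

lemma Fi_rec_aux:
  assumes w: "Im w \<noteq> 0"
    and e: "\<And>x. smat (of_real x) (P n (of_real x)) = R (of_real x)"
    and mR: "mmom (\<lambda>x. smat (1 / (of_real x - w)) (R (of_real x) ** W x))"
  shows "integral\<^sup>L \<tau> (\<lambda>x. smat (1 / (of_real x - w)) (R (of_real x) ** W x))
     = integral\<^sup>L \<tau> (\<lambda>x. P n (of_real x) ** W x) + smat w (Fi n w)"
proof -
  have pt: "smat (1 / (of_real x - w)) (R (of_real x) ** W x) = P n (of_real x) ** W x + smat w (smat (1 / (of_real x - w)) (P n (of_real x) ** W x))" for x
  proof -
    have xw: "complex_of_real x - w \<noteq> 0" using w by (auto simp: complex_eq_iff)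
    have "smat (1 / (of_real x - w)) (R (of_real x) ** W x) = smat (of_real x / (of_real x - w)) (P n (of_real x) ** W x)"
      by (simp add: e[symmetric] smat_mult_left smat_smat)
    also have "of_real x / (of_real x - w) = 1 + w * (1 / (of_real x - w))"
      using xw by (simp add: field_simps)
    finally show ?thesis by (simp add: smat_add_left smat_smat)
  qed
  show ?thesis
    unfolding pt Fi_def
    by (subst I_add[OF mm_PW mmom_smatc[OF mm_rPW[OF w]]]) (simp add: I_smatc[OF mm_rPW[OF w]])
qed

lemma FiS:
  assumes w: "Im w \<noteq> 0"
  shows "smat w (Fi (Suc n) w) = A (Suc n) ** Fi (Suc (Suc n)) w + B (Suc n) ** Fi (Suc n) w + madj (A n) ** Fi n w"
proof -
  define R where "R = (\<lambda>y. A (Suc n) ** P (Suc (Suc n)) y + B (Suc n) ** P (Suc n) y + madj (A n) ** P n y)"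
  have e: "smat (of_real x) (P (Suc n) (of_real x)) = R (of_real x)" for x
    using rec unfolding R_def three_term_def by (metis Suc_eq_plus1 le_add2 diff_Suc_1 add_diff_cancel_right')
  have pt: "smat (1 / (of_real x - w)) (R (of_real x) ** W x) =
      A (Suc n) ** smat (1 / (of_real x - w)) (P (Suc (Suc n)) (of_real x) ** W x)
    + B (Suc n) ** smat (1 / (of_real x - w)) (P (Suc n) (of_real x) ** W x)
    + madj (A n) ** smat (1 / (of_real x - w)) (P n (of_real x) ** W x)" for x
    by (simp add: R_def madd_r smat_add smat_mult_right matrix_mul_assoc)
  have m: "mmom (\<lambda>x. smat (1 / (of_real x - w)) (R (of_real x) ** W x))"
    unfolding pt by (intro mmom_add mmom_lmult mm_rPW w)
  have "integral\<^sup>L \<tau> (\<lambda>x. smat (1 / (of_real x - w)) (R (of_real x) ** W x))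
      = A (Suc n) ** Fi (Suc (Suc n)) w + B (Suc n) ** Fi (Suc n) w + madj (A n) ** Fi n w"
    unfolding pt Fi_def
    by (simp add: I_add mmom_add mmom_lmult mm_rPW w I_lmult)
  moreover have "integral\<^sup>L \<tau> (\<lambda>x. smat (1 / (of_real x - w)) (R (of_real x) ** W x)) = smat w (Fi (Suc n) w)"
    using Fi_rec_aux[OF w e m] intPW[of "Suc n"] by simp
  ultimately show ?thesis by simp
qed

lemma Fi0:
  assumes w: "Im w \<noteq> 0"
  shows "A 0 ** Fi 1 w + B 0 ** Fi 0 w - smat w (Fi 0 w) = matrix_inv (madj (P 0 (cnj w)))"
proof -
  define R where "R = (\<lambda>y. A 0 ** P 1 y + B 0 ** P 0 y)"
  have e: "smat (of_real x) (P 0 (of_real x)) = R (of_real x)" for x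
    using rec unfolding R_def three_term_def by simp
  have pt: "smat (1 / (of_real x - w)) (R (of_real x) ** W x) =
      A 0 ** smat (1 / (of_real x - w)) (P 1 (of_real x) ** W x)
    + B 0 ** smat (1 / (of_real x - w)) (P 0 (of_real x) ** W x)" for x
    by (simp add: R_def madd_r smat_add smat_mult_right matrix_mul_assoc)
  have m: "mmom (\<lambda>x. smat (1 / (of_real x - w)) (R (of_real x) ** W x))"
    unfolding pt by (intro mmom_add mmom_lmult mm_rPW w)
  have "integral\<^sup>L \<tau> (\<lambda>x. smat (1 / (of_real x - w)) (R (of_real x) ** W x))
      = A 0 ** Fi 1 w + B 0 ** Fi 0 w"
    unfolding pt Fi_def
    by (simp add: I_add mmom_add mmom_lmult mm_rPW w I_lmult)
  moreover have "integral\<^sup>L \<tau> (\<lambda>x. smat (1 / (of_real x - w)) (R (of_real x) ** W x)) = matrix_inv (madj C0) + smat w (Fi 0 w)"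
    using Fi_rec_aux[OF w e m] intPW[of 0] by simp
  ultimately have "A 0 ** Fi 1 w + B 0 ** Fi 0 w = matrix_inv (madj C0) + smat w (Fi 0 w)" by simp
  thus ?thesis by (simp add: P0c)
qed

definition Sr where "Sr w = integral\<^sup>L \<tau> (\<lambda>x. smat (1 / (of_real x - w)) (W x))"

lemma Fi0_S: "Im w \<noteq> 0 \<Longrightarrow> Fi 0 w = C0 ** Sr w"
  unfolding Fi_def Sr_def P0c
  by (subst I_lmult[OF mm_rW, symmetric]) (simp_all add: smat_mult_right)

lemma herm_AE: "AE x in \<tau>. madj (W x) = W x"
  using std unfolding standing_assumptions_def posdef_def hermitian_def by auto

lemma Sr_adj:
  assumes w: "Im w \<noteq> 0"
  shows "madj (Sr (cnj w)) = Sr w"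
proof -
  have w': "Im (cnj w) \<noteq> 0" using w by simp
  have "madj (Sr (cnj w)) = integral\<^sup>L \<tau> (\<lambda>x. madj (smat (1 / (of_real x - cnj w)) (W x)))"
    unfolding Sr_def by (rule I_madj[OF mm_rW[OF w'], symmetric])
  also have "\<dots> = integral\<^sup>L \<tau> (\<lambda>x. smat (1 / (of_real x - w)) (madj (W x)))"
    by (simp add: madj_smat)
  also have "\<dots> = Sr w" unfolding Sr_def
    by (rule I_cong[OF mmom_smat[OF mmom_madj[OF W_mmom] rmeas rbound[OF w]] mm_rW[OF w]]) (use herm_AE in auto)
  finally show ?thesis .
qed

lemma FiS_sym:
  assumes z: "Im z \<noteq> 0"
  shows "madj (Fi 0 (cnj z)) ** matrix_inv (madj (P 0 (cnj z))) = matrix_inv (P 0 z) ** Fi 0 z"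
proof -
  have z': "Im (cnj z) \<noteq> 0" using z by simp
  have ic: "invertible (madj C0)" by (rule invertible_madj[OF C0inv])
  have "madj (Fi 0 (cnj z)) ** matrix_inv (madj (P 0 (cnj z))) = Sr z ** (madj C0 ** matrix_inv (madj C0))"
    by (simp add: Fi0_S[OF z'] madj_mult Sr_adj[OF z] P0c matrix_mul_assoc)
  also have "\<dots> = Sr z" by (simp add: inv_props(1)[OF ic])
  also have "\<dots> = (matrix_inv C0 ** C0) ** Sr z" by (simp add: inv_props(2)[OF C0inv])
  also have "\<dots> = matrix_inv (P 0 z) ** Fi 0 z" by (simp add: Fi0_S[OF z] P0c matrix_mul_assoc)
  finally show ?thesis .
qed


lemma posdef_AE: "AE x in \<tau>. posdef (W x)"
  using std unfolding standing_assumptions_def by auto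

lemma bessel_N:
  assumes z: "Im z \<noteq> 0"
  shows "(\<Sum>n<N. (norm (Fi n z *v y))\<^sup>2) \<le> Re (cinner (integral\<^sup>L \<tau> (\<lambda>x. smat (1 / (of_real x - cnj z) * (1 / (of_real x - z))) (W x)) *v y) y)"
proof -
  have z': "Im (cnj z) \<noteq> 0" using z by simp
  define r where "r = (\<lambda>x::real. 1 / (complex_of_real x - z))"
  define rc where "rc = (\<lambda>x::real. 1 / (complex_of_real x - cnj z))"
  define F where "F = (\<lambda>n. Fi n z)"
  define Px where "Px = (\<lambda>n x. P n (complex_of_real x))"
  define T1 where "T1 = (\<lambda>x. smat (rc x * r x) (W x))"
  define T2 where "T2 = (\<lambda>n x. smat (rc x) (W x ** madj (Px n x)) ** F n)"
  define T3 where "T3 = (\<lambda>n x. madj (F n) ** smat (r x) (Px n x ** W x))"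
  define T4 where "T4 = (\<lambda>n m x. madj (F n) ** (Px n x ** W x ** madj (Px m x)) ** F m)"
  define Psi :: "real \<Rightarrow> complex^'n^'n" where "Psi = (\<lambda>x. smat (r x) (mat 1) - (\<Sum>n<N. madj (Px n x) ** F n))"
  define Q where "Q = (\<lambda>x. T1 x - (\<Sum>n<N. T2 n x) - (\<Sum>n<N. T3 n x) + (\<Sum>n<N. \<Sum>m<N. T4 n m x))"
  have cr: "cnj (r x) = rc x" for x by (simp add: r_def rc_def)
  have pt: "madj (Psi x) ** W x ** Psi x = Q x" for x
  proof -
    define a :: "complex^'n^'n" where "a = smat (r x) (mat 1)"
    define b where "b = (\<Sum>n<N. madj (Px n x) ** F n)"
    have ma: "madj a = smat (rc x) (mat 1)" by (simp add: a_def madj_smat cr)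
    have mb: "madj b = (\<Sum>n<N. madj (F n) ** Px n x)" by (simp add: b_def madj_sum madj_mult)
    have i1: "madj a ** W x ** a = T1 x" unfolding ma by (simp add: a_def T1_def smat_one_mult mult_smat_one smat_smat mult.commute)
    have i2: "madj a ** W x ** b = (\<Sum>n<N. T2 n x)"
      unfolding ma by (simp add: b_def T2_def smat_one_mult msum_l matrix_mul_assoc smat_mult_left smat_sum)
    have i3: "madj b ** W x ** a = (\<Sum>n<N. T3 n x)"
      unfolding mb by (simp add: a_def T3_def mult_smat_one msum_r matrix_mul_assoc smat_mult_right smat_sum)
    have i4: "madj b ** W x ** b = (\<Sum>n<N. \<Sum>m<N. T4 n m x)"
      unfolding mb by (simp add: b_def T4_def msum_r msum_l matrix_mul_assoc) (rule sum.swap)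
    have "madj (Psi x) ** W x ** Psi x = (madj a - madj b) ** W x ** (a - b)"
      by (simp add: Psi_def a_def b_def madj_diff)
    also have "\<dots> = madj a ** W x ** a - madj a ** W x ** b - (madj b ** W x ** a - madj b ** W x ** b)"
      by (simp add: mdiff_r mdiff_l)
    also have "\<dots> = Q x" by (simp add: i1 i2 i3 i4 Q_def)
    finally show ?thesis .
  qed
  have rcm: "rc \<in> borel_measurable \<tau>" unfolding rc_def by (rule rmeas)
  have rrm: "(\<lambda>x. rc x * r x) \<in> borel_measurable \<tau>" unfolding rc_def r_def by measurable
  have rrb: "cmod (rc x * r x) \<le> (1 / \<bar>Im z\<bar>) * (1 / \<bar>Im z\<bar>)" for x
    unfolding rc_def r_def norm_mult using rbound[OF z', of x] rbound[OF z, of x]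
    by (intro mult_mono) auto
  have m1: "mmom T1" unfolding T1_def by (rule mmom_smat[OF W_mmom rrm rrb])
  have m2': "mmom (\<lambda>x. smat (rc x) (W x ** madj (Px n x)))" for n
    unfolding Px_def rc_def by (rule mmom_smat[OF mmom_pr[OF polyPadj W_mmom] rmeas rbound[OF z']])
  have m2: "mmom (T2 n)" for n unfolding T2_def by (rule mmom_rmult[OF m2'])
  have m3': "mmom (\<lambda>x. smat (r x) (Px n x ** W x))" for n unfolding r_def Px_def by (rule mm_rPW[OF z])
  have m3: "mmom (T3 n)" for n unfolding T3_def by (rule mmom_lmult[OF m3'])
  have m4: "mmom (T4 n m)" for n m unfolding T4_def Px_def by (intro mmom_rmult mmom_lmult mm_PWP)
  have mQ: "mmom Q" unfolding Q_def by (intro mmom_add mmom_diff mmom_sum m1 m2 m3 m4) auto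
  define S2 where "S2 = integral\<^sup>L \<tau> T1"
  have iF: "integral\<^sup>L \<tau> (\<lambda>x. smat (r x) (Px n x ** W x)) = F n" for n
    by (simp add: F_def Fi_def r_def Px_def)
  have i2: "integral\<^sup>L \<tau> (T2 n) = madj (F n) ** F n" for n
  proof -
    have "integral\<^sup>L \<tau> (\<lambda>x. smat (rc x) (W x ** madj (Px n x))) = integral\<^sup>L \<tau> (\<lambda>x. madj (smat (r x) (Px n x ** W x)))"
    proof (rule I_cong[OF m2' mmom_madj[OF m3']])
      show "AE x in \<tau>. smat (rc x) (W x ** madj (Px n x)) = madj (smat (r x) (Px n x ** W x))"
        using herm_AE by eventually_elim (simp add: madj_smat madj_mult cr)
    qed
    also have "\<dots> = madj (F n)" by (simp add: I_madj[OF m3'] iF)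
    finally show ?thesis unfolding T2_def by (simp add: I_rmult[OF m2'])
  qed
  have i3: "integral\<^sup>L \<tau> (T3 n) = madj (F n) ** F n" for n
    unfolding T3_def by (simp add: I_lmult[OF m3'] iF)
  have i4: "integral\<^sup>L \<tau> (T4 n m) = (if n = m then madj (F n) ** F m else 0)" for n m
  proof -
    have "integral\<^sup>L \<tau> (T4 n m) = madj (F n) ** integral\<^sup>L \<tau> (\<lambda>x. Px n x ** W x ** madj (Px m x)) ** F m"
      unfolding T4_def Px_def
      by (simp add: I_rmult[OF mmom_lmult[OF mm_PWP]] I_lmult[OF mm_PWP])
    thus ?thesis unfolding Px_def orthI by simp
  qed
  have iQ: "integral\<^sup>L \<tau> Q = S2 - (\<Sum>n<N. madj (F n) ** F n)"
  proof -
    have "integral\<^sup>L \<tau> Q = S2 - (\<Sum>n<N. integral\<^sup>L \<tau> (T2 n)) - (\<Sum>n<N. integral\<^sup>L \<tau> (T3 n)) + (\<Sum>n<N. \<Sum>m<N. integral\<^sup>L \<tau> (T4 n m))"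
      unfolding Q_def S2_def
      by (simp add: I_add I_diff I_sum mmom_add mmom_diff mmom_sum m1 m2 m3 m4)
    also have "(\<Sum>n<N. \<Sum>m<N. integral\<^sup>L \<tau> (T4 n m)) = (\<Sum>n<N. madj (F n) ** F n)"
      by (simp add: i4)
    finally show ?thesis by (simp add: i2 i3)
  qed
  have nn: "0 \<le> Re (cinner (integral\<^sup>L \<tau> Q *v y) y)"
  proof -
    have "Re (cinner (integral\<^sup>L \<tau> Q *v y) y) = integral\<^sup>L \<tau> (\<lambda>x. Re (cinner (Q x *v y) y))"
      by (simp add: I_cinner[OF mQ] integral_Re[OF cinner_integrable[OF mQ]])
    also have "\<dots> \<ge> 0"
    proof (rule integral_nonneg_AE)
      show "AE x in \<tau>. 0 \<le> Re (cinner (Q x *v y) y)"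
        using posdef_AE
      proof eventually_elim
        fix x assume pd: "posdef (W x)"
        have "cinner (Q x *v y) y = cinner (W x *v (Psi x *v y)) (Psi x *v y)"
          unfolding pt[symmetric] by (simp add: matrix_vector_mul_assoc[symmetric] cinner_madj)
        moreover have "0 \<le> Re (cinner (W x *v v) v)" for v
          using pd unfolding posdef_def by (cases "v = 0") (auto intro: less_imp_le)
        ultimately show "0 \<le> Re (cinner (Q x *v y) y)" by simp
      qed
    qed
    finally show ?thesis .
  qed
  have nF: "Re (cinner ((madj (F n) ** F n) *v y) y) = (norm (F n *v y))\<^sup>2" for n
    by (simp add: matrix_vector_mul_assoc[symmetric] cinner_madj2[symmetric] cinner_self)
  have "0 \<le> Re (cinner (S2 *v y) y) - (\<Sum>n<N. (norm (F n *v y))\<^sup>2)"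
    using nn unfolding iQ by (simp add: mdiff_mvec msum_mvec cinner_diff_left cinner_sum_left nF)
  thus ?thesis by (simp add: S2_def T1_def r_def rc_def F_def)
qed

lemma bessel:
  assumes z: "Im z \<noteq> 0"
  shows "summable (\<lambda>n. (norm (Fi n z *v y))\<^sup>2)"
  by (rule summableI_nonneg_bounded[OF _ bessel_N[OF z]]) simp

end

theorem theorem4p15:
  fixes \<tau> :: "real measure" and W :: "real \<Rightarrow> complex ^ 'n::finite ^ 'n"
    and P :: "nat \<Rightarrow> complex \<Rightarrow> complex ^ 'n ^ 'n"
    and A B :: "nat \<Rightarrow> complex ^ 'n ^ 'n"
    and z :: complex
  assumes std: "standing_assumptions \<tau> W"
    and orth: "orthonormal_polys \<tau> W P"
    and P0: "\<forall>x. P 0 x = inv_sqrt (moment0 \<tau> W)"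
    and rec: "three_term P A B"
    and A_inv: "\<forall>n. invertible (A n)"
    and B_sa: "\<forall>n. hermitian (B n)"
    and divergent: "\<forall>w. Im w \<noteq> 0 \<longrightarrow> (\<forall>v::complex ^ 'n. v \<noteq> 0 \<longrightarrow>
                      \<not> summable (\<lambda>n. (norm (P n w *v v))\<^sup>2))"
    and z_nonreal: "Im z \<noteq> 0"
  shows "z \<in> resolvent_set (jacobi_adj A B) (jacobi_adj_dom A B) \<and>
         (\<exists>G. is_resolvent (jacobi_adj A B) (jacobi_adj_dom A B) z G \<and>
              (\<forall>V\<in>finseq. G V = Gop \<tau> W P z V))"
proof -
  interpret an: ana \<tau> W P A B by unfold_locales (fact std orth rec)+
  have zc: "Im (cnj z) \<noteq> 0" using z_nonreal by simp
  interpret jf: jacF A B P z "Ffun \<tau> W P"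
  proof unfold_locales
    show "\<And>n. invertible (A n)" using A_inv by blast
    show "\<And>n. hermitian (B n)" using B_sa by blast
    show "three_term P A B" by (fact rec)
    show "\<And>w. invertible (P 0 w)" by (rule an.P0inv)
    show "\<forall>w. Im w \<noteq> 0 \<longrightarrow> (\<forall>v::complex ^ 'n. v \<noteq> 0 \<longrightarrow> \<not> summable (\<lambda>n. (norm (P n w *v v))\<^sup>2))"
      by (fact divergent)
    show "Im z \<noteq> 0" by (fact z_nonreal)
    show "\<And>w n. Im w \<noteq> 0 \<Longrightarrow> smat w (Ffun \<tau> W P (Suc n) w) = A (Suc n) ** Ffun \<tau> W P (Suc (Suc n)) w + B (Suc n) ** Ffun \<tau> W P (Suc n) w + madj (A n) ** Ffun \<tau> W P n w"
      by (simp add: an.Ffun_int an.FiS)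
    show "\<And>w. Im w \<noteq> 0 \<Longrightarrow> A 0 ** Ffun \<tau> W P 1 w + B 0 ** Ffun \<tau> W P 0 w - smat w (Ffun \<tau> W P 0 w) = matrix_inv (madj (P 0 (cnj w)))"
      by (simp add: an.Ffun_int an.Fi0 del: One_nat_def)
    show "madj (Ffun \<tau> W P 0 (cnj z)) ** matrix_inv (madj (P 0 (cnj z))) = matrix_inv (P 0 z) ** Ffun \<tau> W P 0 z"
      by (simp add: an.Ffun_int[OF z_nonreal] an.Ffun_int[OF zc] an.FiS_sym[OF z_nonreal])
    show "\<And>y. summable (\<lambda>n. (norm (Ffun \<tau> W P n z *v y))\<^sup>2)"
      by (simp add: an.Ffun_int[OF z_nonreal] an.bessel[OF z_nonreal])
  qed
  have R: "is_resolvent (jacobi_adj A B) (jacobi_adj_dom A B) z jf.Gres" by (rule jf.Gres_resolvent)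
  have E: "jf.Gres V = Gop \<tau> W P z V" if V: "V \<in> finseq" for V
  proof -
    obtain M where M: "\<forall>n\<ge>M. V n = 0" using V by (auto simp: finseq_def)
    have gm: "Gmat \<tau> W P z n k *v w = jf.col k w n" for n k w
      by (simp add: Gmat_def star_fun_def jf.col_def matrix_vector_mul_assoc)
    have "Gop \<tau> W P z V n = (\<Sum>k<M. jf.col k (V k) n)" for n
    proof -
      have "Gop \<tau> W P z V n = (\<Sum>k<M. Gmat \<tau> W P z n k *v V k)"
        unfolding Gop_def by (rule suminf_finite) (use M in auto)
      thus ?thesis by (simp add: gm)
    qed
    thus ?thesis using jf.Gres_finseq[OF M] by (simp add: fun_eq_iff)
  qed
  show ?thesis using R E unfolding resolvent_set_def by blast
qed

end
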